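(* Assume $F(x,v,u)=F_0(x,v)+F_1(x,v)u$ with $F_0:\mathbb{R}^n\times\mathbb{R}^n\to\mathbb{R}^n$ and $F_1:\mathbb{R}^n\times\mathbb{R}^n\to\mathbb{R}^{n\times m}$ globally Lipschitz continuous and continuously differentiable, and $\phi\in C([-\tau,0];\mathbb{R}^n)$. Let $(u_k)_{k\in\mathbb{N}}$ be bounded in $L^\infty(I;\mathbb{R}^m)$ with $u_k\rightharpoonup u$ in $L^1(I;\mathbb{R}^m)$. For each $k$ let $x_k$ be the solution of $x_k'(t)=F(x_k(t),\mathrm{LIE}_k(x_{k,t}),u_k(t))$ for a.e. $t\in I$ with $x_k=\phi$ on $[-\tau,0]$, and let $x$ be the solution of $x'(t)=F(x(t),\max x_t,u(t))$ for a.e. $t\in(0,T)$ with $x=\phi$ on $[-\tau,0]$. Then $x_k\rightharpoonup x$ in $W^{1,1}(I;\mathbb{R}^n)$.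
   Context: $n,m\ge1$, $T>0$, $\tau>0$, $I=[0,T]$, $I_\tau=[-\tau,T]$. For $x\in C(I_\tau;\mathbb{R}^n)$ and $t\in I$: $x_t(s)=x(t-s)$ for $s\in[0,\tau]$, $x_{k,t}:=(x_k)_t$, $\max x_t:=\max_{s\in[t-\tau,t]}x(s)$ and $\mathrm{LIE}_k(x_t):=\frac1k\log\big(\int_{t-\tau}^t\exp(k\,x(s))\,\mathrm{d}s\big)$, both componentwise. Solutions are understood in $C(I_\tau;\mathbb{R}^n)\cap W^{1,\infty}(I;\mathbb{R}^n)$. *)

theory Defs
  imports "HOL-Analysis.Analysis"
begin

definition maxhist :: "real \<Rightarrow> (real \<Rightarrow> real^'n) \<Rightarrow> real \<Rightarrow> real^'n" where
  "maxhist \<tau> x t = (\<chi> i. Sup ((\<lambda>s. x s $ i) ` {t - \<tau>..t}))"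

definition LIE :: "real \<Rightarrow> real \<Rightarrow> (real \<Rightarrow> real^'n) \<Rightarrow> real \<Rightarrow> real^'n" where
  "LIE k \<tau> x t = (\<chi> i. (1 / k) * ln (integral {t - \<tau>..t} (\<lambda>s. exp (k * (x s $ i)))))"

definition lip_C1 :: "('a::euclidean_space \<Rightarrow> 'b::euclidean_space) \<Rightarrow> bool" where
  "lip_C1 G \<longleftrightarrow> (\<exists>L. L-lipschitz_on UNIV G) \<and>
     (\<exists>G'. (\<forall>p. (G has_derivative blinfun_apply (G' p)) (at p)) \<and> continuous_on UNIV G')"

definition Linf :: "real set \<Rightarrow> (real \<Rightarrow> 'a::euclidean_space) \<Rightarrow> bool" where
  "Linf S g \<longleftrightarrow> g \<in> borel_measurable (lebesgue_on S) \<and> (\<exists>B. AE t in lebesgue_on S. norm (g t) \<le> B)"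

text \<open>Weak convergence in L^1(S): testing against all of L-infinity(S) (the dual of L^1).\<close>
definition weak_L1 :: "real set \<Rightarrow> (nat \<Rightarrow> real \<Rightarrow> 'a::euclidean_space) \<Rightarrow> (real \<Rightarrow> 'a) \<Rightarrow> bool" where
  "weak_L1 S f h \<longleftrightarrow> (\<forall>k. integrable (lebesgue_on S) (f k)) \<and> integrable (lebesgue_on S) h \<and>
     (\<forall>g. Linf S g \<longrightarrow>
        (\<lambda>k. integral\<^sup>L (lebesgue_on S) (\<lambda>t. f k t \<bullet> g t))
          \<longlonglongrightarrow> integral\<^sup>L (lebesgue_on S) (\<lambda>t. h t \<bullet> g t))"

text \<open>Weak convergence in W^{1,1}(S): every functional of the dual, i.e.
  w \<mapsto> int (w . g0 + w' . g1) with g0, g1 in L-infinity, converges.\<close>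
definition weak_W11 :: "real set \<Rightarrow> (nat \<Rightarrow> real \<Rightarrow> 'a::euclidean_space) \<Rightarrow> (real \<Rightarrow> 'a) \<Rightarrow> bool" where
  "weak_W11 S f h \<longleftrightarrow>
     (\<forall>g0 g1. Linf S g0 \<longrightarrow> Linf S g1 \<longrightarrow>
        (\<lambda>k. integral\<^sup>L (lebesgue_on S)
               (\<lambda>t. f k t \<bullet> g0 t + vector_derivative (f k) (at t) \<bullet> g1 t))
          \<longlonglongrightarrow> integral\<^sup>L (lebesgue_on S)
               (\<lambda>t. h t \<bullet> g0 t + vector_derivative h (at t) \<bullet> g1 t))"

text \<open>x is a solution in C([-tau,T]) \<inter> W^{1,inf}([0,T]) of x'(t) = rhs t for a.e. t in [0,T],
  with x = phi on [-tau,0].  (W^{1,inf} on an interval = Lipschitz.)\<close>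
definition is_solution :: "real \<Rightarrow> real \<Rightarrow> (real \<Rightarrow> real^'n) \<Rightarrow> (real \<Rightarrow> real^'n) \<Rightarrow> (real \<Rightarrow> real^'n) \<Rightarrow> bool" where
  "is_solution \<tau> T \<phi> rhs x \<longleftrightarrow>
     continuous_on {-\<tau>..T} x \<and> (\<exists>L. L-lipschitz_on {0..T} x) \<and>
     (\<forall>t\<in>{-\<tau>..0}. x t = \<phi> t) \<and>
     (AE t in lebesgue_on {0..T}. (x has_vector_derivative rhs t) (at t))"

end

theory Submission
  imports Defs
begin


lemma AE_negl:
  assumes "AE t in lebesgue_on S. P t" "S \<in> sets lebesgue"
  shows "\<exists>N. negligible N \<and> (\<forall>t\<in>S. t \<notin> N \<longrightarrow> P t)"
proof -
  from assms(1) obtain N where N: "{t \<in> space (lebesgue_on S). \<not> P t} \<subseteq> N" "N \<in> null_sets (lebesgue_on S)"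
    unfolding eventually_ae_filter by blast
  then have "N \<in> null_sets lebesgue" using null_sets_restrict_space[OF assms(2)] by auto
  then have "negligible N" by (simp add: negligible_iff_null_sets)
  moreover have "\<forall>t\<in>S. t \<notin> N \<longrightarrow> P t" using N(1) by auto
  ultimately show ?thesis by blast
qed

lemma spike_bound:
  fixes f :: "real \<Rightarrow> 'a::euclidean_space"
  assumes "(f has_integral i) {s..t}" "s \<le> t" "negligible N" "0 \<le> B"
    "\<And>x. x \<in> {s..t} \<Longrightarrow> x \<notin> N \<Longrightarrow> norm (f x) \<le> B"
  shows "norm i \<le> B * (t - s)"
proof -
  let ?g = "\<lambda>x. if x \<in> N then 0 else f x"
  have "(?g has_integral i) {s..t}"
    by (rule has_integral_spike[OF assms(3) _ assms(1)]) auto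
  then have "norm i \<le> B * Henstock_Kurzweil_Integration.content (cbox s t)"
    by (intro has_integral_bound[OF assms(4)]) (use assms(5) assms(4) in auto)
  then show ?thesis using assms(2) by simp
qed

lemma dq_seq:
  fixes z :: "real \<Rightarrow> 'a::real_normed_vector"
  assumes "(z has_vector_derivative r) (at t)"
  shows "(\<lambda>n. (z (t + 1 / real (Suc n)) - z t) /\<^sub>R (1 / real (Suc n))) \<longlonglongrightarrow> r"
proof -
  let ?F = "\<lambda>y. norm (z y - z t - (y - t) *\<^sub>R r) / norm (y - t)"
  have F: "(?F \<longlongrightarrow> 0) (at t)"
    using assms unfolding has_vector_derivative_def has_derivative_iff_norm by auto
  have h0: "(\<lambda>n. 1 / real (Suc n)) \<longlonglongrightarrow> 0"
    using LIMSEQ_inverse_real_of_nat by (simp add: inverse_eq_divide)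
  have lim: "filterlim (\<lambda>n. t + 1 / real (Suc n)) (at t) sequentially"
  proof (rule tendsto_imp_filterlim_at_right[THEN filterlim_mono])
    show "((\<lambda>n. t + 1 / real (Suc n)) \<longlongrightarrow> t) sequentially"
      using tendsto_add[OF tendsto_const h0, of t] by simp
    show "\<forall>\<^sub>F n in sequentially. t < t + 1 / real (Suc n)" by auto
  qed (auto intro: at_le)
  have "(\<lambda>n. ?F (t + 1 / real (Suc n))) \<longlonglongrightarrow> 0"
    by (rule filterlim_compose[OF F lim])
  moreover have "?F (t + 1 / real (Suc n)) = norm ((z (t + 1 / real (Suc n)) - z t) /\<^sub>R (1 / real (Suc n)) - r)" for n
  proof -
    have "(z (t + 1 / real (Suc n)) - z t) /\<^sub>R (1 / real (Suc n)) - r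
        = real (Suc n) *\<^sub>R (z (t + 1 / real (Suc n)) - z t - (1 / real (Suc n)) *\<^sub>R r)"
      by (simp add: algebra_simps)
    then show ?thesis by simp
  qed
  ultimately have "(\<lambda>n. norm ((z (t + 1 / real (Suc n)) - z t) /\<^sub>R (1 / real (Suc n)) - r)) \<longlonglongrightarrow> 0"
    by simp
  then show ?thesis
    using Lim_null tendsto_norm_zero_iff by blast
qed


lemma ftc_lip:
  fixes z :: "real \<Rightarrow> 'a::euclidean_space"
  assumes ab: "a \<le> b" and L: "L-lipschitz_on {a..b} z" and N: "negligible N"
    and D: "\<And>t. t \<in> {a<..<b} \<Longrightarrow> t \<notin> N \<Longrightarrow> (z has_vector_derivative r t) (at t)"
  shows "(r has_integral (z b - z a)) {a..b}"
proof (cases "a = b")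
  case True
  then show ?thesis by auto
next
  case False
  with ab have ab': "a < b" by simp
  have L0: "0 \<le> L" using lipschitz_on_nonneg[OF L] .
  define zh where "zh t = z (max a (min t b))" for t
  have zhL: "L-lipschitz_on UNIV zh"
  proof (rule lipschitz_onI[OF _ L0])
    fix s t :: real
    have "dist (zh s) (zh t) \<le> L * dist (max a (min s b)) (max a (min t b))"
      unfolding zh_def using ab by (intro lipschitz_onD[OF L]) auto
    also have "\<dots> \<le> L * dist s t"
      by (intro mult_left_mono[OF _ L0]) (auto simp: dist_real_def)
    finally show "dist (zh s) (zh t) \<le> L * dist s t" .
  qed
  have zhc: "continuous_on S zh" for S
    using lipschitz_on_continuous_on[OF zhL] continuous_on_subset by blast
  define h where "h n = 1 / real (Suc n)" for n
  have hpos: "h n > 0" for n unfolding h_def by simp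
  define q where "q n t = (zh (t + h n) - zh t) /\<^sub>R h n" for n t
  have qbound: "norm (q n t) \<le> L" for n t
  proof -
    have "norm (zh (t + h n) - zh t) \<le> L * h n"
      using lipschitz_onD[OF zhL, of "t + h n" t] hpos[of n] by (simp add: dist_norm)
    then show ?thesis using hpos[of n] unfolding q_def by (simp add: divide_simps mult.commute)
  qed
  define y where "y n = integral {a..b} (q n)" for n
  have qint: "(q n has_integral y n) {a..b}" for n
  proof -
    have "continuous_on {a..b} (q n)" unfolding q_def
      by (intro continuous_intros zhc[THEN continuous_on_compose2]) auto
    then show ?thesis unfolding y_def
      using integrable_continuous_real by blast
  qed
  have yconv: "norm (y n - (z b - z a)) \<le> L * h n" for n
  proof -
    let ?h = "h n"
    have hp: "?h > 0" by (rule hpos)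
    have int: "zh integrable_on {c..d}" for c d
      using integrable_continuous_real zhc by blast
    have sh: "integral {a..b} (\<lambda>t. zh (t + ?h)) = integral {a + ?h..b + ?h} zh"
      using integral_shift_Icc_real[of a b zh ?h] by (simp add: o_def add.commute)
    have c1: "integral {a..a + ?h} zh + integral {a + ?h..b + ?h} zh = integral {a..b + ?h} zh"
      by (rule Henstock_Kurzweil_Integration.integral_combine) (use hp ab int in auto)
    have c2: "integral {a..b} zh + integral {b..b + ?h} zh = integral {a..b + ?h} zh"
      by (rule Henstock_Kurzweil_Integration.integral_combine) (use hp ab int in auto)
    have bconst: "integral {b..b + ?h} zh = ?h *\<^sub>R z b"
    proof -
      have "integral {b..b + ?h} zh = integral {b..b + ?h} (\<lambda>_. z b)"
        by (intro integral_cong) (auto simp: zh_def ab max_def min_def)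
      then show ?thesis using hp by simp
    qed
    have aint: "norm (integral {a..a + ?h} zh - ?h *\<^sub>R z a) \<le> L * ?h * ?h"
    proof -
      have "((\<lambda>t. zh t - z a) has_integral (integral {a..a + ?h} zh - ?h *\<^sub>R z a)) {a..a + ?h}"
        using has_integral_diff[OF integrable_integral[OF int] has_integral_const_real[of "z a" a "a + ?h"]] hp
        by simp
      moreover have "norm (zh t - z a) \<le> L * ?h" if "t \<in> {a..a + ?h}" for t
      proof -
        have "zh a = z a" unfolding zh_def using ab by simp
        then have "norm (zh t - z a) \<le> L * dist t a"
          using lipschitz_onD[OF zhL, of t a] by (simp add: dist_norm)
        also have "\<dots> \<le> L * ?h" using that by (intro mult_left_mono[OF _ L0]) (auto simp: dist_real_def)
        finally show ?thesis .
      qed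
      ultimately show ?thesis
        using spike_bound[of _ _ a "a + ?h" "{}" "L * ?h"] hp L0 by force
    qed
    have "y n = (integral {a..b} (\<lambda>t. zh (t + ?h)) - integral {a..b} zh) /\<^sub>R ?h"
    proof -
      have i1: "(\<lambda>t. zh (t + ?h)) integrable_on {a..b}"
        using integrable_on_shift_Icc_real[of zh ?h a b] int by (simp add: o_def add.commute)
      have "y n = integral {a..b} (\<lambda>t. inverse ?h *\<^sub>R (zh (t + ?h) - zh t))"
        unfolding y_def q_def by (simp add: divide_inverse_commute)
      also have "\<dots> = inverse ?h *\<^sub>R integral {a..b} (\<lambda>t. zh (t + ?h) - zh t)"
        by (rule integral_cmul)
      also have "\<dots> = inverse ?h *\<^sub>R (integral {a..b} (\<lambda>t. zh (t + ?h)) - integral {a..b} zh)"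
        using integral_diff[OF i1 int] by simp
      finally show ?thesis by (simp add: divide_inverse_commute)
    qed
    also have "\<dots> = (?h *\<^sub>R z b - integral {a..a + ?h} zh) /\<^sub>R ?h"
    proof -
      have e1: "integral {a + ?h..b + ?h} zh = integral {a..b + ?h} zh - integral {a..a + ?h} zh"
        using c1 by (metis add_diff_cancel_left')
      have e2: "integral {a..b} zh = integral {a..b + ?h} zh - ?h *\<^sub>R z b"
        using c2 bconst by (metis add_diff_cancel_right')
      show ?thesis unfolding sh e1 e2 by simp
    qed
    also have "\<dots> = z b - integral {a..a + ?h} zh /\<^sub>R ?h"
      using hp by (simp add: algebra_simps)
    finally have "y n - (z b - z a) = - ((integral {a..a + ?h} zh - ?h *\<^sub>R z a) /\<^sub>R ?h)"
      using hp by (simp add: algebra_simps)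
    then have "norm (y n - (z b - z a)) = norm (integral {a..a + ?h} zh - ?h *\<^sub>R z a) / ?h"
      using hp by (simp add: divide_inverse_commute)
    also have "\<dots> \<le> L * ?h * ?h / ?h"
      using aint hp by (intro divide_right_mono) auto
    finally show ?thesis using hp by simp
  qed
  have ylim: "y \<longlonglongrightarrow> z b - z a"
  proof -
    have "(\<lambda>n. L * h n) \<longlonglongrightarrow> 0"
      unfolding h_def using tendsto_mult_right_zero[OF LIMSEQ_inverse_real_of_nat, of L]
      by (simp add: inverse_eq_divide)
    then have "(\<lambda>n. y n - (z b - z a)) \<longlonglongrightarrow> 0"
      by (rule Lim_null_comparison[rotated]) (use yconv in auto)
    then show ?thesis by (simp add: LIM_zero_iff)
  qed
  let ?N = "N \<union> {a, b}"
  have N': "negligible ?N" using N by simp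
  define qq where "qq n t = (if t \<in> ?N then 0 else q n t)" for n t
  define rr where "rr t = (if t \<in> ?N then 0 else r t)" for t
  have rr: "(rr has_integral (z b - z a)) {a..b}"
  proof (rule has_integral_dominated_convergence[where f = qq and y = y and h = "\<lambda>_. L"])
    show "(qq k has_integral y k) {a..b}" for k
      by (rule has_integral_spike[OF N' _ qint]) (auto simp: qq_def)
    show "(\<lambda>_. L) integrable_on {a..b}" by (rule integrable_const_ivl)
    show "\<forall>x\<in>{a..b}. norm (qq k x) \<le> L" for k using qbound L0 by (auto simp: qq_def)
    show "\<forall>x\<in>{a..b}. (\<lambda>k. qq k x) \<longlonglongrightarrow> rr x"
    proof
      fix t assume t: "t \<in> {a..b}"
      show "(\<lambda>k. qq k t) \<longlonglongrightarrow> rr t"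
      proof (cases "t \<in> ?N")
        case True then show ?thesis by (simp add: qq_def rr_def)
      next
        case False
        then have t': "t \<in> {a<..<b}" "t \<notin> N" using t by auto
        have d: "(z has_vector_derivative r t) (at t)" using D[OF t'] .
        have "(\<lambda>n. (z (t + h n) - z t) /\<^sub>R h n) \<longlonglongrightarrow> r t"
          using dq_seq[OF d] unfolding h_def .
        moreover have "eventually (\<lambda>n. (z (t + h n) - z t) /\<^sub>R h n = qq n t) sequentially"
        proof -
          obtain M where M: "1 / real (Suc M) < b - t"
            using reals_Archimedean[of "b - t"] t' by (auto simp: inverse_eq_divide)
          have "(z (t + h n) - z t) /\<^sub>R h n = qq n t" if "n \<ge> M" for n
          proof -
            have "h n \<le> h M" unfolding h_def using that by (simp add: frac_le)
            then have "t + h n < b" using M unfolding h_def by simp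
            then show ?thesis using False t' hpos[of n]
              by (simp add: qq_def q_def zh_def max_def min_def)
          qed
          then show ?thesis unfolding eventually_sequentially by blast
        qed
        ultimately have "(\<lambda>n. qq n t) \<longlonglongrightarrow> r t"
          by (rule Lim_transform_eventually)
        then show ?thesis using False by (simp add: rr_def)
      qed
    qed
    show "y \<longlonglongrightarrow> z b - z a" by (rule ylim)
  qed
  show ?thesis
    by (rule has_integral_spike[OF N' _ rr]) (auto simp: rr_def)
qed


lemma lip_deriv_bound:
  fixes z :: "real \<Rightarrow> 'a::real_normed_vector"
  assumes L: "L-lipschitz_on {a..b} z" and t: "t \<in> {a<..<b}"
    and d: "(z has_vector_derivative r) (at t)"
  shows "norm r \<le> L"
proof -
  have lim: "(\<lambda>n. (z (t + 1 / real (Suc n)) - z t) /\<^sub>R (1 / real (Suc n))) \<longlonglongrightarrow> r"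
    by (rule dq_seq[OF d])
  obtain M where M: "1 / real (Suc M) < b - t"
    using reals_Archimedean[of "b - t"] t by (auto simp: inverse_eq_divide)
  have "norm ((z (t + 1 / real (Suc n)) - z t) /\<^sub>R (1 / real (Suc n))) \<le> L" if "n \<ge> M" for n
  proof -
    have p1: "1 / real (Suc n) \<le> 1 / real (Suc M)" using that by (simp add: frac_le)
    have p2: "0 \<le> 1 / real (Suc n)" by simp
    have ta: "a < t" "t < b" using t by auto
    have "a \<le> t + 1 / real (Suc n)" "t + 1 / real (Suc n) \<le> b" using p1 p2 ta M by linarith+
    then have "t + 1 / real (Suc n) \<in> {a..b}" by auto
    then have "norm (z (t + 1 / real (Suc n)) - z t) \<le> L * (1 / real (Suc n))"
      using lipschitz_onD[OF L, of "t + 1 / real (Suc n)" t] t by (simp add: dist_norm)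
    then have "real (Suc n) * norm (z (t + 1 / real (Suc n)) - z t) \<le> L"
      by (simp add: pos_le_divide_eq mult.commute del: of_nat_Suc)
    then show ?thesis by (simp del: of_nat_Suc)
  qed
  then have "eventually (\<lambda>n. norm ((z (t + 1 / real (Suc n)) - z t) /\<^sub>R (1 / real (Suc n))) \<le> L) sequentially"
    unfolding eventually_sequentially by blast
  then show ?thesis
    using tendsto_upperbound[OF tendsto_norm[OF lim]] by auto
qed

lemma sol_int:
  fixes x :: "real \<Rightarrow> 'a::euclidean_space"
  assumes L: "L-lipschitz_on {0..T} x" and N: "negligible N"
    and D: "\<And>t. t \<in> {0..T} \<Longrightarrow> t \<notin> N \<Longrightarrow> (x has_vector_derivative rhs t) (at t)"
    and st: "0 \<le> s" "s \<le> t" "t \<le> T"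
  shows "(rhs has_integral (x t - x s)) {s..t}"
proof (rule ftc_lip[OF st(2) _ N])
  show "L-lipschitz_on {s..t} x" by (rule lipschitz_on_subset[OF L]) (use st in auto)
  show "(x has_vector_derivative rhs u) (at u)" if "u \<in> {s<..<t}" "u \<notin> N" for u
    using that st by (intro D) auto
qed

lemma vd_abs_int:
  fixes z :: "real \<Rightarrow> 'a::euclidean_space"
  assumes ab: "a \<le> b" and L: "L-lipschitz_on {a..b} z" and N: "negligible N"
    and D: "\<And>t. t \<in> {a<..<b} \<Longrightarrow> t \<notin> N \<Longrightarrow> (z has_vector_derivative r t) (at t)"
  shows "(\<lambda>t. vector_derivative z (at t)) absolutely_integrable_on {a..b}"
proof -
  let ?N = "N \<union> {a, b}"
  have N': "negligible ?N" using N by simp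
  define rr where "rr t = (if t \<in> ?N then 0 else r t)" for t
  have ri: "(r has_integral (z b - z a)) {a..b}" by (rule ftc_lip[OF ab L N D])
  have "(rr has_integral (z b - z a)) {a..b}"
    by (rule has_integral_spike[OF N' _ ri]) (auto simp: rr_def)
  moreover have "norm (rr t) \<le> L" if "t \<in> {a..b}" for t
  proof (cases "t \<in> ?N")
    case True then show ?thesis using lipschitz_on_nonneg[OF L] by (simp add: rr_def)
  next
    case False
    then have t: "t \<in> {a<..<b}" "t \<notin> N" using that by auto
    show ?thesis using lip_deriv_bound[OF L t(1) D[OF t]] False by (simp add: rr_def)
  qed
  ultimately have "rr absolutely_integrable_on {a..b}"
    by (intro absolutely_integrable_integrable_bound[where g = "\<lambda>_. L"]) (auto intro: integrable_const_ivl)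
  then show ?thesis
  proof (rule absolutely_integrable_spike[OF _ N'])
    fix t assume "t \<in> {a..b} - ?N"
    then have t: "t \<in> {a<..<b}" "t \<notin> N" by auto
    show "vector_derivative z (at t) = rr t"
      using vector_derivative_at[OF D[OF t]] t by (simp add: rr_def)
  qed
qed

lemma gw:
  fixes w :: "real \<Rightarrow> real"
  assumes h: "0 < h" and rho: "1 \<le> \<rho>" and a: "0 \<le> a" "w 0 \<le> a" and T: "0 \<le> T"
    and step: "\<And>s t. 0 \<le> s \<Longrightarrow> s \<le> t \<Longrightarrow> t \<le> T \<Longrightarrow> t - s \<le> h \<Longrightarrow> w t \<le> a + \<rho> * w s"
  shows "w T \<le> a * (real (nat \<lceil>T/h\<rceil>) + 1) * \<rho> ^ nat \<lceil>T/h\<rceil>"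
proof -
  have claim: "w (min (real j * h) T) \<le> a * (real j + 1) * \<rho> ^ j" for j
  proof (induction j)
    case 0
    then show ?case using a T by simp
  next
    case (Suc j)
    let ?s = "min (real j * h) T" and ?t = "min (real (Suc j) * h) T"
    have "w ?t \<le> a + \<rho> * w ?s"
      using h T by (intro step) (auto simp: algebra_simps min_def)
    also have "\<dots> \<le> a + \<rho> * (a * (real j + 1) * \<rho> ^ j)"
      using Suc rho by (intro add_left_mono mult_left_mono) auto
    also have "\<dots> \<le> a * \<rho> ^ Suc j + a * (real j + 1) * \<rho> ^ Suc j"
    proof -
      have "1 \<le> \<rho> ^ Suc j" using rho by (rule one_le_power)
      then have "a * 1 \<le> a * \<rho> ^ Suc j" using a by (intro mult_left_mono) auto
      then show ?thesis by (simp add: algebra_simps)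
    qed
    also have "\<dots> = a * (real (Suc j) + 1) * \<rho> ^ Suc j"
      by (simp add: algebra_simps)
    finally show ?case .
  qed
  have "T \<le> real (nat \<lceil>T/h\<rceil>) * h"
  proof -
    have "T / h \<le> real (nat \<lceil>T/h\<rceil>)" by linarith
    then show ?thesis using h by (simp add: divide_le_eq)
  qed
  then have "min (real (nat \<lceil>T/h\<rceil>) * h) T = T" by simp
  then show ?thesis using claim[of "nat \<lceil>T/h\<rceil>"] by simp
qed


lemma sup_le_shift:
  fixes f g :: "real \<Rightarrow> real"
  assumes "K \<noteq> {}" "bdd_above (g ` K')" "\<And>s. s \<in> K \<Longrightarrow> \<exists>s'\<in>K'. f s \<le> g s' + D"
  shows "Sup (f ` K) \<le> Sup (g ` K') + D"
proof (rule cSUP_least[OF assms(1)])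
  fix s assume "s \<in> K"
  then obtain s' where "s' \<in> K'" "f s \<le> g s' + D" using assms(3) by blast
  moreover have "g s' \<le> Sup (g ` K')" using \<open>s' \<in> K'\<close> assms(2) by (rule cSUP_upper)
  ultimately show "f s \<le> Sup (g ` K') + D" by linarith
qed

lemma bdd_cont:
  fixes y :: "real \<Rightarrow> real"
  assumes "continuous_on S y" "compact S"
  shows "bdd_above (y ` S)" "bdd_below (y ` S)"
proof -
  have "bounded (y ` S)" using compact_continuous_image[OF assms(1,2)] compact_imp_bounded by blast
  then show "bdd_above (y ` S)" "bdd_below (y ` S)"
    by (auto intro: bounded_imp_bdd_above bounded_imp_bdd_below)
qed

lemma sup_hist_cont:
  fixes y :: "real \<Rightarrow> real"
  assumes cy: "continuous_on {-\<tau>..T} y" and tau: "0 < \<tau>"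
  shows "continuous_on {0..T} (\<lambda>t. Sup (y ` {t-\<tau>..t}))"
proof -
  have uc: "uniformly_continuous_on {-\<tau>..T} y"
    using compact_uniformly_continuous[OF cy] by simp
  have bdd: "bdd_above (y ` {t-\<tau>..t})" if "t \<in> {0..T}" for t
    using bdd_cont(1)[OF continuous_on_subset[OF cy]] that by auto
  show ?thesis
    unfolding continuous_on_iff
  proof (intro ballI allI impI)
    fix t e :: real assume t: "t \<in> {0..T}" and e: "0 < e"
    obtain d where d: "d > 0" "\<And>s s'. s \<in> {-\<tau>..T} \<Longrightarrow> s' \<in> {-\<tau>..T} \<Longrightarrow> dist s' s < d \<Longrightarrow> dist (y s') (y s) < e/2"
      using uc e unfolding uniformly_continuous_on_def by (metis half_gt_zero)
    show "\<exists>d>0. \<forall>t'\<in>{0..T}. dist t' t < d \<longrightarrow> dist (Sup (y ` {t'-\<tau>..t'})) (Sup (y ` {t-\<tau>..t})) < e"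
    proof (intro exI[of _ d] conjI ballI impI)
      show "d > 0" by (rule d(1))
      fix t' assume t': "t' \<in> {0..T}" and dt: "dist t' t < d"
      have "Sup (y ` {t'-\<tau>..t'}) \<le> Sup (y ` {t-\<tau>..t}) + e/2"
      proof (rule sup_le_shift)
        show "{t'-\<tau>..t'} \<noteq> {}" using tau by simp
        show "bdd_above (y ` {t-\<tau>..t})" by (rule bdd[OF t])
        fix s assume s: "s \<in> {t'-\<tau>..t'}"
        have "s - (t' - t) \<in> {t-\<tau>..t}" using s by auto
        moreover have dd: "dist (y s) (y (s - (t' - t))) < e/2"
          using s t t' dt by (intro d(2)) (auto simp: dist_real_def)
        have "y s \<le> y (s - (t' - t)) + e/2" using dd unfolding dist_real_def by linarith
        ultimately show "\<exists>s'\<in>{t-\<tau>..t}. y s \<le> y s' + e/2"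
          by (intro bexI[of _ "s - (t' - t)"])
      qed
      moreover have "Sup (y ` {t-\<tau>..t}) \<le> Sup (y ` {t'-\<tau>..t'}) + e/2"
      proof (rule sup_le_shift)
        show "{t-\<tau>..t} \<noteq> {}" using tau by simp
        show "bdd_above (y ` {t'-\<tau>..t'})" by (rule bdd[OF t'])
        fix s assume s: "s \<in> {t-\<tau>..t}"
        have "s + (t' - t) \<in> {t'-\<tau>..t'}" using s by auto
        moreover have dd: "dist (y s) (y (s + (t' - t))) < e/2"
          using s t t' dt by (intro d(2)) (auto simp: dist_real_def)
        have "y s \<le> y (s + (t' - t)) + e/2" using dd unfolding dist_real_def by linarith
        ultimately show "\<exists>s'\<in>{t'-\<tau>..t'}. y s \<le> y s' + e/2"
          by (intro bexI[of _ "s + (t' - t)"])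
      qed
      ultimately show "dist (Sup (y ` {t'-\<tau>..t'})) (Sup (y ` {t-\<tau>..t})) < e"
        using e by (simp add: dist_real_def abs_le_iff)
    qed
  qed
qed

lemma LIE_bounds:
  fixes y :: "real \<Rightarrow> real"
  assumes cy: "continuous_on {a..b} y" and k: "0 < k"
    and up: "\<And>s. s \<in> {a..b} \<Longrightarrow> y s \<le> m"
    and sub: "a \<le> c" "c + \<eta> \<le> b" "0 < \<eta>"
    and low: "\<And>s. s \<in> {c..c+\<eta>} \<Longrightarrow> m' \<le> y s"
  shows "m' + ln \<eta> / k \<le> (1/k) * ln (integral {a..b} (\<lambda>s. exp (k * y s)))"
    and "(1/k) * ln (integral {a..b} (\<lambda>s. exp (k * y s))) \<le> m + ln (b - a) / k"
proof -
  let ?f = "\<lambda>s. exp (k * y s)"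
  have cf: "continuous_on {a..b} ?f" by (intro continuous_intros cy)
  have intab: "?f integrable_on {a..b}" using integrable_continuous_real[OF cf] .
  have intc: "?f integrable_on {c..c+\<eta>}"
    by (rule integrable_on_subinterval[OF intab]) (use sub in auto)
  have "integral {c..c+\<eta>} (\<lambda>_. exp (k * m')) \<le> integral {c..c+\<eta>} ?f"
    using low k by (intro integral_le intc) (auto intro: integrable_const_ivl)
  then have lo1: "\<eta> * exp (k * m') \<le> integral {c..c+\<eta>} ?f" using sub by simp
  have lo2: "integral {c..c+\<eta>} ?f \<le> integral {a..b} ?f"
    by (rule integral_subset_le) (use sub intc intab in auto)
  have I: "\<eta> * exp (k * m') \<le> integral {a..b} ?f" using lo1 lo2 by linarith
  have Ipos: "0 < integral {a..b} ?f" using I sub by (smt (verit) exp_gt_zero mult_pos_pos)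
  have "integral {a..b} ?f \<le> integral {a..b} (\<lambda>_. exp (k * m))"
    using up k by (intro integral_le intab) (auto intro: integrable_const_ivl)
  then have hi: "integral {a..b} ?f \<le> (b - a) * exp (k * m)" using sub by simp
  have "ln (\<eta> * exp (k * m')) \<le> ln (integral {a..b} ?f)"
    using I sub by (intro ln_mono) auto
  then have "ln \<eta> + k * m' \<le> ln (integral {a..b} ?f)" using sub by (simp add: ln_mult)
  then have "(ln \<eta> + k * m') / k \<le> ln (integral {a..b} ?f) / k"
    using k by (intro divide_right_mono) auto
  moreover have "(ln \<eta> + k * m') / k = m' + ln \<eta> / k" using k by (simp add: add_divide_distrib)
  ultimately show "m' + ln \<eta> / k \<le> (1/k) * ln (integral {a..b} ?f)" by simp
  have "ln (integral {a..b} ?f) \<le> ln ((b - a) * exp (k * m))"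
    using hi Ipos by (intro ln_mono) auto
  also have "\<dots> = ln (b - a) + k * m" using sub by (simp add: ln_mult)
  finally show "(1/k) * ln (integral {a..b} ?f) \<le> m + ln (b - a) / k"
    using k by (simp add: field_simps)
qed

lemma norm_mv:
  fixes A :: "real^'m^'n"
  shows "norm (A *v v) \<le> real CARD('n) * norm A * norm v"
proof -
  have "norm (A *v v) \<le> (\<Sum>i\<in>UNIV. \<bar>(A *v v) $ i\<bar>)" by (rule norm_le_l1_cart)
  also have "\<dots> \<le> (\<Sum>i\<in>(UNIV::'n set). norm A * norm v)"
  proof (rule sum_mono)
    fix i
    have "\<bar>(A *v v) $ i\<bar> = \<bar>A $ i \<bullet> v\<bar>" by (simp add: matrix_vector_mul_component)
    also have "\<dots> \<le> norm (A $ i) * norm v" by (rule Cauchy_Schwarz_ineq2)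
    also have "\<dots> \<le> norm A * norm v" by (intro mult_right_mono Finite_Cartesian_Product.norm_nth_le) auto
    finally show "\<bar>(A *v v) $ i\<bar> \<le> norm A * norm v" .
  qed
  also have "\<dots> = real CARD('n) * norm A * norm v" by simp
  finally show ?thesis .
qed


lemma lipF:
  assumes "L-lipschitz_on UNIV (\<lambda>p. F (fst p) (snd p))"
  shows "norm (F a b - F c d) \<le> L * (norm (a - c) + norm (b - d))"
proof -
  have "dist (F a b) (F c d) \<le> L * dist (a, b) (c, d)"
    using lipschitz_onD[OF assms, of "(a, b)" "(c, d)"] by simp
  also have "dist (a, b) (c, d) = norm (a - c, b - d)" by (simp add: dist_norm)
  also have "\<dots> \<le> norm (a - c) + norm (b - d)" by (rule norm_Pair_le)
  finally show ?thesis using lipschitz_on_nonneg[OF assms]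
    by (simp add: dist_norm) (smt (verit, ccfv_SIG) mult_left_mono)
qed

lemma growthF:
  assumes "L-lipschitz_on UNIV (\<lambda>p. F (fst p) (snd p))"
  shows "norm (F a b) \<le> norm (F 0 0) + L * (norm a + norm b)"
  using lipF[OF assms, of a b 0 0] norm_triangle_sub[of "F a b" "F 0 0"] by simp

lemma meas_mv:
  fixes f :: "'a \<Rightarrow> real^'m^'n"
  assumes "f \<in> borel_measurable M" "g \<in> borel_measurable M"
  shows "(\<lambda>x. f x *v g x) \<in> borel_measurable M"
proof (rule borel_measurable_continuous_Pair[OF assms])
  show "continuous_on UNIV (\<lambda>x. fst x *v snd x :: real^'n)"
    unfolding matrix_vector_mult_def by (intro continuous_intros)
qed

lemma int_bound_T:
  fixes f :: "real \<Rightarrow> 'a::euclidean_space"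
  assumes "integrable (lebesgue_on {a..b}) f" "a \<le> b" "AE t in lebesgue_on {a..b}. norm (f t) \<le> B" "0 \<le> B"
  shows "norm (integral\<^sup>L (lebesgue_on {a..b}) f) \<le> B * (b - a)"
proof -
  have eq: "integral\<^sup>L (lebesgue_on {a..b}) f = integral {a..b} f"
    using assms(1) by (rule lebesgue_integral_eq_integral) simp
  have "f integrable_on {a..b}" by (rule integrable_on_lebesgue_on[OF assms(1)]) simp
  then have hi: "(f has_integral integral {a..b} f) {a..b}" by (rule integrable_integral)
  obtain N where N: "negligible N" "\<forall>t\<in>{a..b}. t \<notin> N \<longrightarrow> norm (f t) \<le> B"
    using AE_negl[OF assms(3)] by auto
  show ?thesis unfolding eq
    by (rule spike_bound[OF hi assms(2) N(1) assms(4)]) (use N(2) in auto)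
qed

lemma integrable_bdd_T:
  fixes f :: "real \<Rightarrow> 'a::euclidean_space"
  assumes "f \<in> borel_measurable (lebesgue_on {a..b})" "AE t in lebesgue_on {a..b}. norm (f t) \<le> B"
  shows "integrable (lebesgue_on {a..b}) f"
  by (rule finite_measure.integrable_const_bound[OF finite_measure_lebesgue_on[OF lmeasurable_interval(1)] assms(2,1)])

lemma tendsto_zero_eps:
  fixes f :: "nat \<Rightarrow> 'a::real_normed_vector"
  assumes "\<And>\<delta>. \<delta> > 0 \<Longrightarrow> eventually (\<lambda>k. norm (f k) \<le> \<delta>) sequentially"
  shows "f \<longlonglongrightarrow> 0"
proof (rule tendstoI)
  fix e :: real assume "e > 0"
  then have "eventually (\<lambda>k. norm (f k) \<le> e/2) sequentially" by (intro assms) simp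
  then show "eventually (\<lambda>k. dist (f k) 0 < e) sequentially"
    by eventually_elim (use \<open>e > 0\<close> in simp)
qed



locale cor =
  fixes T \<tau> :: real
    and F0 :: "real^'n \<Rightarrow> real^'n \<Rightarrow> real^'n"
    and F1 :: "real^'n \<Rightarrow> real^'n \<Rightarrow> real^'m^'n"
    and \<phi> :: "real \<Rightarrow> real^'n"
    and us :: "nat \<Rightarrow> real \<Rightarrow> real^'m" and u :: "real \<Rightarrow> real^'m"
    and xs :: "nat \<Rightarrow> real \<Rightarrow> real^'n" and x :: "real \<Rightarrow> real^'n"
  assumes T0: "T > 0" and tau: "\<tau> > 0"
    and F0L: "lip_C1 (\<lambda>p::(real^'n) \<times> (real^'n). F0 (fst p) (snd p))"
    and F1L: "lip_C1 (\<lambda>p::(real^'n) \<times> (real^'n). F1 (fst p) (snd p))"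
    and phic: "continuous_on {-\<tau>..0} \<phi>"
    and usm: "\<forall>k. us k \<in> borel_measurable (lebesgue_on {0..T})"
    and uC: "\<exists>C. \<forall>k. AE t in lebesgue_on {0..T}. norm (us k t) \<le> C"
    and wL1: "weak_L1 {0..T} us u"
    and solk: "\<forall>k. is_solution \<tau> T \<phi>
           (\<lambda>t. F0 (xs k t) (LIE (real (Suc k)) \<tau> (xs k) t)
                 + F1 (xs k t) (LIE (real (Suc k)) \<tau> (xs k) t) *v us k t) (xs k)"
    and sol: "is_solution \<tau> T \<phi> (\<lambda>t. F0 (x t) (maxhist \<tau> x t) + F1 (x t) (maxhist \<tau> x t) *v u t) x"
begin

definition "lk k t = LIE (real (Suc k)) \<tau> (xs k) t"
definition "rk k t = F0 (xs k t) (lk k t) + F1 (xs k t) (lk k t) *v us k t"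
definition "M t = maxhist \<tau> x t"
definition "G t = F1 (x t) (M t)"
definition "rx t = F0 (x t) (M t) + G t *v u t"
definition "D = real CARD('n)"
definition "L0 = (SOME L. L-lipschitz_on UNIV (\<lambda>p::(real^'n) \<times> (real^'n). F0 (fst p) (snd p)))"
definition "L1 = (SOME L. L-lipschitz_on UNIV (\<lambda>p::(real^'n) \<times> (real^'n). F1 (fst p) (snd p)))"
definition "Cu = max 0 (SOME C. \<forall>k. AE t in lebesgue_on {0..T}. norm (us k t) \<le> C)"
definition "Lk k = (SOME L. L-lipschitz_on {0..T} (xs k))"
definition "Lx = (SOME L. L-lipschitz_on {0..T} x)"
definition "Nk k = (SOME N. negligible N \<and> (\<forall>t\<in>{0..T}. t \<notin> N \<longrightarrow>
    (xs k has_vector_derivative rk k t) (at t) \<and> norm (us k t) \<le> Cu))"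
definition "Nx = (SOME N. negligible N \<and> (\<forall>t\<in>{0..T}. t \<notin> N \<longrightarrow>
    (x has_vector_derivative rx t) (at t)))"

lemma L0: "L0-lipschitz_on UNIV (\<lambda>p::(real^'n) \<times> (real^'n). F0 (fst p) (snd p))"
proof -
  have "\<exists>L. L-lipschitz_on UNIV (\<lambda>p::(real^'n) \<times> (real^'n). F0 (fst p) (snd p))"
    using F0L unfolding lip_C1_def by blast
  then show ?thesis unfolding L0_def by (rule someI_ex)
qed
lemma L1: "L1-lipschitz_on UNIV (\<lambda>p::(real^'n) \<times> (real^'n). F1 (fst p) (snd p))"
proof -
  have "\<exists>L. L-lipschitz_on UNIV (\<lambda>p::(real^'n) \<times> (real^'n). F1 (fst p) (snd p))"
    using F1L unfolding lip_C1_def by blast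
  then show ?thesis unfolding L1_def by (rule someI_ex)
qed
lemma L0nn: "0 \<le> L0" using lipschitz_on_nonneg[OF L0] .
lemma L1nn: "0 \<le> L1" using lipschitz_on_nonneg[OF L1] .
lemma Cu: "0 \<le> Cu" "AE t in lebesgue_on {0..T}. norm (us k t) \<le> Cu"
proof -
  show "0 \<le> Cu" unfolding Cu_def by simp
  have "\<forall>k. AE t in lebesgue_on {0..T}. norm (us k t) \<le> (SOME C. \<forall>k. AE t in lebesgue_on {0..T}. norm (us k t) \<le> C)"
    using uC by (rule someI_ex)
  then have "AE t in lebesgue_on {0..T}. norm (us k t) \<le> (SOME C. \<forall>k. AE t in lebesgue_on {0..T}. norm (us k t) \<le> C)"
    by blast
  then show "AE t in lebesgue_on {0..T}. norm (us k t) \<le> Cu"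
    unfolding Cu_def by (rule eventually_mono) linarith
qed
lemma Dpos: "D \<ge> 1" unfolding D_def by (simp add: Suc_le_eq)

lemma solk_facts:
  shows "continuous_on {-\<tau>..T} (xs k)" "(Lk k)-lipschitz_on {0..T} (xs k)"
    "\<And>t. t \<in> {-\<tau>..0} \<Longrightarrow> xs k t = \<phi> t"
    "negligible (Nk k)"
    "\<And>t. t \<in> {0..T} \<Longrightarrow> t \<notin> Nk k \<Longrightarrow> (xs k has_vector_derivative rk k t) (at t)"
    "\<And>t. t \<in> {0..T} \<Longrightarrow> t \<notin> Nk k \<Longrightarrow> norm (us k t) \<le> Cu"
proof -
  have s: "is_solution \<tau> T \<phi> (rk k) (xs k)" using solk unfolding rk_def lk_def by blast
  show "continuous_on {-\<tau>..T} (xs k)" "\<And>t. t \<in> {-\<tau>..0} \<Longrightarrow> xs k t = \<phi> t"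
    using s unfolding is_solution_def by auto
  show "(Lk k)-lipschitz_on {0..T} (xs k)"
  proof -
    have "\<exists>L. L-lipschitz_on {0..T} (xs k)" using s unfolding is_solution_def by blast
    then show ?thesis unfolding Lk_def by (rule someI_ex)
  qed
  have "AE t in lebesgue_on {0..T}. (xs k has_vector_derivative rk k t) (at t) \<and> norm (us k t) \<le> Cu"
    using eventually_conj[OF _ Cu(2)[of k]] s unfolding is_solution_def by blast
  from AE_negl[OF this] have "\<exists>N. negligible N \<and> (\<forall>t\<in>{0..T}. t \<notin> N \<longrightarrow>
    (xs k has_vector_derivative rk k t) (at t) \<and> norm (us k t) \<le> Cu)" by simp
  then have "negligible (Nk k) \<and> (\<forall>t\<in>{0..T}. t \<notin> Nk k \<longrightarrow>
    (xs k has_vector_derivative rk k t) (at t) \<and> norm (us k t) \<le> Cu)"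
    unfolding Nk_def by (rule someI_ex)
  then show "negligible (Nk k)"
    "\<And>t. t \<in> {0..T} \<Longrightarrow> t \<notin> Nk k \<Longrightarrow> (xs k has_vector_derivative rk k t) (at t)"
    "\<And>t. t \<in> {0..T} \<Longrightarrow> t \<notin> Nk k \<Longrightarrow> norm (us k t) \<le> Cu" by auto
qed

lemma sol_facts:
  shows "continuous_on {-\<tau>..T} x" "Lx-lipschitz_on {0..T} x"
    "\<And>t. t \<in> {-\<tau>..0} \<Longrightarrow> x t = \<phi> t"
    "negligible Nx"
    "\<And>t. t \<in> {0..T} \<Longrightarrow> t \<notin> Nx \<Longrightarrow> (x has_vector_derivative rx t) (at t)"
proof -
  have s: "is_solution \<tau> T \<phi> rx x" using sol unfolding rx_def G_def M_def by blast
  show "continuous_on {-\<tau>..T} x" "\<And>t. t \<in> {-\<tau>..0} \<Longrightarrow> x t = \<phi> t"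
    using s unfolding is_solution_def by auto
  show "Lx-lipschitz_on {0..T} x"
  proof -
    have "\<exists>L. L-lipschitz_on {0..T} x" using s unfolding is_solution_def by blast
    then show ?thesis unfolding Lx_def by (rule someI_ex)
  qed
  have "AE t in lebesgue_on {0..T}. (x has_vector_derivative rx t) (at t)"
    using s unfolding is_solution_def by auto
  from AE_negl[OF this] have "\<exists>N. negligible N \<and> (\<forall>t\<in>{0..T}. t \<notin> N \<longrightarrow>
    (x has_vector_derivative rx t) (at t))" by simp
  then have "negligible Nx \<and> (\<forall>t\<in>{0..T}. t \<notin> Nx \<longrightarrow> (x has_vector_derivative rx t) (at t))"
    unfolding Nx_def by (rule someI_ex)
  then show "negligible Nx"
    "\<And>t. t \<in> {0..T} \<Longrightarrow> t \<notin> Nx \<Longrightarrow> (x has_vector_derivative rx t) (at t)" by auto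
qed


lemma xs_comp_cont: "S \<subseteq> {-\<tau>..T} \<Longrightarrow> continuous_on S (\<lambda>s. xs k s $ i)"
  using continuous_on_subset[OF solk_facts(1)] by (intro continuous_intros) auto

lemma LIE_comp:
  assumes "t \<in> {0..T}"
  shows "lk k t $ i = (1 / real (Suc k)) * ln (integral {t-\<tau>..t} (\<lambda>s. exp (real (Suc k) * (xs k s $ i))))"
  unfolding lk_def LIE_def by simp

lemma lk_bound:
  assumes t: "t \<in> {0..T}" and W: "\<And>s. s \<in> {t-\<tau>..t} \<Longrightarrow> norm (xs k s) \<le> W"
  shows "norm (lk k t) \<le> D * (W + \<bar>ln \<tau>\<bar>)"
proof -
  have ci: "\<bar>lk k t $ i\<bar> \<le> W + \<bar>ln \<tau>\<bar>" for i
  proof -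
    let ?k = "real (Suc k)"
    have cy: "continuous_on {t-\<tau>..t} (\<lambda>s. xs k s $ i)" using t by (intro xs_comp_cont) auto
    have up: "xs k s $ i \<le> W" if "s \<in> {t-\<tau>..t}" for s
      using W[OF that] component_le_norm_cart[of "xs k s" i] by linarith
    have lo: "- W \<le> xs k s $ i" if "s \<in> {t-\<tau>..t-\<tau>+\<tau>}" for s
    proof -
      have "s \<in> {t-\<tau>..t}" using that by simp
      then have "\<bar>xs k s $ i\<bar> \<le> W" using W component_le_norm_cart order_trans by blast
      then show ?thesis by (simp add: abs_le_iff)
    qed
    have b1: "- W + ln \<tau> / ?k \<le> lk k t $ i"
      using LIE_bounds(1)[where k="real (Suc k)" and c="t-\<tau>" and \<eta>=\<tau> and m=W and m'="-W", OF cy _ up _ _ tau lo]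
        LIE_comp[OF t, of k i] by simp
    have b2: "lk k t $ i \<le> W + ln \<tau> / ?k"
      using LIE_bounds(2)[where k="real (Suc k)" and c="t-\<tau>" and \<eta>=\<tau> and m=W and m'="-W", OF cy _ up _ _ tau lo]
        LIE_comp[OF t, of k i] by simp
    have "\<bar>ln \<tau> / ?k\<bar> = \<bar>ln \<tau>\<bar> / ?k" by (simp add: abs_divide)
    also have "\<dots> \<le> \<bar>ln \<tau>\<bar> / 1" by (intro divide_left_mono) auto
    finally have "\<bar>ln \<tau> / ?k\<bar> \<le> \<bar>ln \<tau>\<bar>" by simp
    then show ?thesis using b1 b2 by linarith
  qed
  have "norm (lk k t) \<le> (\<Sum>i\<in>UNIV. \<bar>lk k t $ i\<bar>)" by (rule norm_le_l1_cart)
  also have "\<dots> \<le> (\<Sum>i\<in>(UNIV::'n set). W + \<bar>ln \<tau>\<bar>)" by (rule sum_mono) (rule ci)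
  also have "\<dots> = D * (W + \<bar>ln \<tau>\<bar>)" by (simp add: D_def)
  finally show ?thesis .
qed


definition "KK = L0 + D * Cu * L1"
definition "c0 = norm (F0 0 0) + D * Cu * norm (F1 0 0) + KK * D * \<bar>ln \<tau>\<bar>"
definition "c1 = KK * (1 + D)"
definition "Wk k t = Sup ((\<lambda>s. norm (xs k s)) ` {-\<tau>..t})"

lemma KK_nn: "0 \<le> KK" unfolding KK_def using L0nn L1nn Cu(1) Dpos by simp
lemma c0_nn: "0 \<le> c0" unfolding c0_def using KK_nn Cu(1) Dpos by simp
lemma c1_nn: "0 \<le> c1" unfolding c1_def using KK_nn Dpos by simp

lemma Wk_bdd: "t \<in> {0..T} \<Longrightarrow> bdd_above ((\<lambda>s. norm (xs k s)) ` {-\<tau>..t})"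
  by (rule bdd_cont(1)) (auto intro!: continuous_intros continuous_on_subset[OF solk_facts(1)])

lemma Wk_ge: "t \<in> {0..T} \<Longrightarrow> s \<in> {-\<tau>..t} \<Longrightarrow> norm (xs k s) \<le> Wk k t"
  unfolding Wk_def by (rule cSUP_upper[OF _ Wk_bdd])

lemma Wk_nn: "t \<in> {0..T} \<Longrightarrow> 0 \<le> Wk k t"
  using Wk_ge[of t "t" k] norm_ge_zero[of "xs k t"] tau by (smt (verit) atLeastAtMost_iff)

lemma rk_bound:
  assumes t: "t \<in> {0..T}" and r: "r \<in> {0..t}" "r \<notin> Nk k"
  shows "norm (rk k r) \<le> c0 + c1 * Wk k t"
proof -
  let ?W = "Wk k t"
  have rT: "r \<in> {0..T}" using r t by auto
  have na: "norm (xs k r) \<le> ?W" using Wk_ge[OF t] r tau by auto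
  have nb: "norm (lk k r) \<le> D * (?W + \<bar>ln \<tau>\<bar>)"
    using lk_bound[OF rT] Wk_ge[OF t] r by auto
  have nu: "norm (us k r) \<le> Cu" using solk_facts(6)[OF rT r(2)] .
  let ?S = "norm (xs k r) + norm (lk k r)"
  have S: "?S \<le> (1 + D) * ?W + D * \<bar>ln \<tau>\<bar>" using na nb by (simp add: algebra_simps)
  have "norm (rk k r) \<le> norm (F0 (xs k r) (lk k r)) + norm (F1 (xs k r) (lk k r) *v us k r)"
    unfolding rk_def by (rule norm_triangle_ineq)
  also have "norm (F1 (xs k r) (lk k r) *v us k r) \<le> D * norm (F1 (xs k r) (lk k r)) * Cu"
  proof -
    have "norm (F1 (xs k r) (lk k r) *v us k r) \<le> D * norm (F1 (xs k r) (lk k r)) * norm (us k r)"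
      using norm_mv unfolding D_def by blast
    also have "\<dots> \<le> D * norm (F1 (xs k r) (lk k r)) * Cu"
      using nu Dpos by (intro mult_left_mono) auto
    finally show ?thesis .
  qed
  also have "norm (F0 (xs k r) (lk k r)) \<le> norm (F0 0 0) + L0 * ?S" by (rule growthF[OF L0])
  also have "D * norm (F1 (xs k r) (lk k r)) * Cu \<le> D * (norm (F1 0 0) + L1 * ?S) * Cu"
    using growthF[OF L1] Dpos Cu(1) by (intro mult_right_mono mult_left_mono) auto
  also have "norm (F0 0 0) + L0 * ?S + D * (norm (F1 0 0) + L1 * ?S) * Cu
      = norm (F0 0 0) + D * Cu * norm (F1 0 0) + KK * ?S"
    unfolding KK_def by (simp add: algebra_simps)
  also have "\<dots> \<le> norm (F0 0 0) + D * Cu * norm (F1 0 0) + KK * ((1 + D) * ?W + D * \<bar>ln \<tau>\<bar>)"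
    using S KK_nn by (intro add_left_mono mult_left_mono) auto
  also have "\<dots> = c0 + c1 * ?W" unfolding c0_def c1_def by (simp add: algebra_simps)
  finally show ?thesis by simp
qed


lemma xs_diff_bound:
  assumes "0 \<le> s" "s \<le> s'" "s' \<le> T" "0 \<le> B"
    and "\<And>r. r \<in> {s..s'} \<Longrightarrow> r \<notin> Nk k \<Longrightarrow> norm (rk k r) \<le> B"
  shows "norm (xs k s' - xs k s) \<le> B * (s' - s)"
proof -
  have "(rk k has_integral (xs k s' - xs k s)) {s..s'}"
    by (rule sol_int[OF solk_facts(2) solk_facts(4) solk_facts(5)]) (use assms in auto)
  then show ?thesis by (rule spike_bound[OF _ assms(2) solk_facts(4) assms(4) assms(5)])
qed

lemma W_step:
  assumes st: "0 \<le> s" "s \<le> t" "t \<le> T"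
  shows "Wk k t \<le> Wk k s + (t - s) * (c0 + c1 * Wk k t)"
proof -
  have tT: "t \<in> {0..T}" and sT: "s \<in> {0..T}" using st by auto
  let ?B = "c0 + c1 * Wk k t"
  have B0: "0 \<le> ?B" using c0_nn c1_nn Wk_nn[OF tT] by simp
  have "Sup ((\<lambda>s. norm (xs k s)) ` {-\<tau>..t}) \<le> Wk k s + (t - s) * ?B"
  proof (rule cSUP_least)
    show "{-\<tau>..t} \<noteq> {}" using st tau by auto
    fix s' assume s': "s' \<in> {-\<tau>..t}"
    show "norm (xs k s') \<le> Wk k s + (t - s) * ?B"
    proof (cases "s' \<le> s")
      case True
      then have "norm (xs k s') \<le> Wk k s" using Wk_ge[OF sT] s' by auto
      moreover have "0 \<le> (t - s) * ?B" using st B0 by simp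
      ultimately show ?thesis by linarith
    next
      case False
      have "norm (xs k s' - xs k s) \<le> ?B * (s' - s)"
      proof (rule xs_diff_bound)
        show "0 \<le> s" "s \<le> s'" "s' \<le> T" using st s' False by auto
        show "0 \<le> ?B" by (rule B0)
        fix r assume "r \<in> {s..s'}" "r \<notin> Nk k"
        then show "norm (rk k r) \<le> ?B" using st s' by (intro rk_bound[OF tT]) auto
      qed
      also have "\<dots> \<le> ?B * (t - s)" using s' B0 by (intro mult_left_mono) auto
      finally have "norm (xs k s' - xs k s) \<le> (t - s) * ?B" by (simp add: mult.commute)
      moreover have "norm (xs k s) \<le> Wk k s" using Wk_ge[OF sT] st tau by auto
      moreover have "norm (xs k s') \<le> norm (xs k s) + norm (xs k s' - xs k s)"
        using norm_triangle_sub[of "xs k s'" "xs k s"] by simp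
      ultimately show ?thesis by linarith
    qed
  qed
  then show ?thesis unfolding Wk_def[of k t] .
qed

definition "hA = 1 / (2 * c1 + 1)"
definition "Phi = Sup ((\<lambda>s. norm (\<phi> s)) ` {-\<tau>..0})"
definition "aA = Phi + 2 * hA * c0"
definition "R = aA * (real (nat \<lceil>T/hA\<rceil>) + 1) * 2 ^ nat \<lceil>T/hA\<rceil>"
definition "Lam = c0 + c1 * R"

lemma hA_pos: "0 < hA" unfolding hA_def using c1_nn by simp
lemma hA_c1: "hA * c1 \<le> 1/2" unfolding hA_def using c1_nn by (simp add: field_simps)

lemma Wk0: "Wk k 0 = Phi"
  unfolding Wk_def Phi_def using solk_facts(3) by (intro arg_cong[where f = Sup] image_cong) auto

lemma Phi_nn: "0 \<le> Phi" using Wk0[of 0] Wk_nn[of 0 0] T0 by simp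

lemma aA_nn: "0 \<le> aA" unfolding aA_def using Phi_nn hA_pos c0_nn by simp

lemma W_step2:
  assumes st: "0 \<le> s" "s \<le> t" "t \<le> T" "t - s \<le> hA"
  shows "Wk k t \<le> aA + 2 * Wk k s"
proof -
  have tT: "t \<in> {0..T}" using st by auto
  have W0: "0 \<le> Wk k t" using Wk_nn[OF tT] .
  have "(t - s) * c0 \<le> hA * c0" using st c0_nn by (intro mult_right_mono) auto
  moreover have "(t - s) * (c1 * Wk k t) \<le> (1/2) * Wk k t"
  proof -
    have "(t - s) * c1 \<le> hA * c1" using st c1_nn by (intro mult_right_mono) auto
    then have "(t - s) * c1 \<le> 1/2" using hA_c1 by linarith
    then have "((t - s) * c1) * Wk k t \<le> (1/2) * Wk k t" using W0 by (intro mult_right_mono) auto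
    then show ?thesis by (simp add: algebra_simps)
  qed
  moreover have "Wk k t \<le> Wk k s + (t - s) * c0 + (t - s) * (c1 * Wk k t)"
    using W_step[OF st(1-3), of k] by (simp add: algebra_simps)
  ultimately have "Wk k t \<le> 2 * Wk k s + 2 * hA * c0" by linarith
  then show ?thesis unfolding aA_def using Phi_nn by linarith
qed

lemma WkT_R: "Wk k T \<le> R"
  unfolding R_def
  by (rule gw[OF hA_pos _ aA_nn _ _ W_step2]) (use Wk0 aA_def hA_pos c0_nn T0 in auto)

lemma xs_bound: "t \<in> {-\<tau>..T} \<Longrightarrow> norm (xs k t) \<le> R"
  using Wk_ge[of T t k] WkT_R[of k] T0 by auto

lemma R_nn: "0 \<le> R" using xs_bound[of 0 0] T0 tau by (smt (verit) atLeastAtMost_iff norm_ge_zero)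

lemma rk_Lam: "r \<in> {0..T} \<Longrightarrow> r \<notin> Nk k \<Longrightarrow> norm (rk k r) \<le> Lam"
  using rk_bound[of T r k] WkT_R c1_nn T0 unfolding Lam_def
  by (smt (verit) atLeastAtMost_iff mult_left_mono)

lemma Lam_nn: "0 \<le> Lam" unfolding Lam_def using c0_nn c1_nn R_nn by simp

lemma xs_lip: "s \<in> {0..T} \<Longrightarrow> t \<in> {0..T} \<Longrightarrow> norm (xs k t - xs k s) \<le> Lam * \<bar>t - s\<bar>"
proof -
  have *: "norm (xs k t - xs k s) \<le> Lam * \<bar>t - s\<bar>" if "s \<in> {0..T}" "t \<in> {0..T}" "s \<le> t" for s t
    using xs_diff_bound[of s t Lam k] rk_Lam Lam_nn that by auto
  assume "s \<in> {0..T}" "t \<in> {0..T}"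
  then show ?thesis using *[of s t] *[of t s] by (cases "s \<le> t") (auto simp: norm_minus_commute abs_minus_commute)
qed


lemma equicont:
  assumes d: "0 < \<delta>"
  shows "\<exists>\<eta>>0. \<forall>k s s'. s \<in> {-\<tau>..T} \<longrightarrow> s' \<in> {-\<tau>..T} \<longrightarrow> \<bar>s - s'\<bar> < \<eta> \<longrightarrow> norm (xs k s - xs k s') \<le> \<delta>"
proof -
  have uc: "uniformly_continuous_on {-\<tau>..0} \<phi>"
    using compact_uniformly_continuous[OF phic] by simp
  obtain \<eta>1 where e1: "\<eta>1 > 0" "\<And>s s'. s \<in> {-\<tau>..0} \<Longrightarrow> s' \<in> {-\<tau>..0} \<Longrightarrow> dist s' s < \<eta>1 \<Longrightarrow> dist (\<phi> s') (\<phi> s) < \<delta>/2"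
    using uc d unfolding uniformly_continuous_on_def by (metis half_gt_zero)
  define \<eta> where "\<eta> = min \<eta>1 (\<delta> / (2 * (Lam + 1)))"
  have \<eta>pos: "\<eta> > 0" unfolding \<eta>_def using e1 d Lam_nn by simp
  have lamb: "Lam * \<bar>a\<bar> \<le> \<delta>/2" if "\<bar>a\<bar> < \<eta>" for a
  proof -
    have "Lam * \<bar>a\<bar> \<le> Lam * (\<delta> / (2 * (Lam + 1)))"
      using that Lam_nn unfolding \<eta>_def by (intro mult_left_mono) auto
    also have "\<dots> \<le> \<delta>/2" using Lam_nn d by (simp add: field_simps)
    finally show ?thesis .
  qed
  have main: "norm (xs k s - xs k s') \<le> \<delta>" if s: "s \<in> {-\<tau>..T}" "s' \<in> {-\<tau>..T}" "\<bar>s - s'\<bar> < \<eta>" "s \<le> s'" for k s s'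
  proof (cases "0 \<le> s")
    case True
    then show ?thesis using xs_lip[of s s' k] lamb[of "s' - s"] s d by (auto simp: norm_minus_commute abs_minus_commute)
  next
    case False
    have p1: "norm (xs k s - xs k (min s' 0)) \<le> \<delta>/2"
    proof -
      have "dist (\<phi> s) (\<phi> (min s' 0)) < \<delta>/2"
        using s False unfolding \<eta>_def by (intro e1(2)) (auto simp: dist_real_def)
      then show ?thesis using solk_facts(3)[of s k] solk_facts(3)[of "min s' 0" k] s False
        by (auto simp: dist_norm)
    qed
    have p2: "norm (xs k (min s' 0) - xs k s') \<le> \<delta>/2"
    proof (cases "s' \<le> 0")
      case True then show ?thesis using d by simp
    next
      case False
      then show ?thesis using xs_lip[of 0 s' k] lamb[of s'] s T0 \<open>\<not> 0 \<le> s\<close>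
        by (auto simp: norm_minus_commute)
    qed
    have "norm (xs k s - xs k s') \<le> norm (xs k s - xs k (min s' 0)) + norm (xs k (min s' 0) - xs k s')"
      using norm_triangle_ineq[of "xs k s - xs k (min s' 0)" "xs k (min s' 0) - xs k s'"] by simp
    then show ?thesis using p1 p2 by linarith
  qed
  show ?thesis
  proof (intro exI[of _ \<eta>] conjI allI impI \<eta>pos)
    fix k s s' assume "s \<in> {-\<tau>..T}" "s' \<in> {-\<tau>..T}" "\<bar>s - s'\<bar> < \<eta>"
    then show "norm (xs k s - xs k s') \<le> \<delta>"
      using main[of s s' k] main[of s' s k] by (cases "s \<le> s'") (auto simp: norm_minus_commute abs_minus_commute)
  qed
qed


lemma maxhist_comp: "maxhist \<tau> y t $ i = Sup ((\<lambda>s. y s $ i) ` {t-\<tau>..t})"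
  unfolding maxhist_def by simp

lemma eps_conv:
  assumes d: "0 < \<delta>"
  shows "\<exists>K0. \<forall>k\<ge>K0. \<forall>t\<in>{0..T}. norm (lk k t - maxhist \<tau> (xs k) t) \<le> \<delta>"
proof -
  define \<delta>' where "\<delta>' = \<delta> / (4 * D)"
  have d': "0 < \<delta>'" unfolding \<delta>'_def using d Dpos by simp
  obtain \<eta>0 where e0: "\<eta>0 > 0" "\<And>k s s'. s \<in> {-\<tau>..T} \<Longrightarrow> s' \<in> {-\<tau>..T} \<Longrightarrow> \<bar>s - s'\<bar> < \<eta>0 \<Longrightarrow> norm (xs k s - xs k s') \<le> \<delta>'"
    using equicont[OF d'] by blast
  define \<eta> where "\<eta> = min (\<eta>0/2) \<tau>"
  have \<eta>: "0 < \<eta>" "\<eta> < \<eta>0" "\<eta> \<le> \<tau>" unfolding \<eta>_def using e0 tau by auto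
  define Q where "Q = \<bar>ln \<eta>\<bar> + \<bar>ln \<tau>\<bar>"
  define K0 where "K0 = nat \<lceil>Q * (2 * D) / \<delta>\<rceil>"
  have Kb: "Q / real (Suc k) \<le> \<delta> / (2 * D)" if "k \<ge> K0" for k
  proof -
    have Q0: "0 \<le> Q" unfolding Q_def by simp
    have "Q * (2 * D) / \<delta> \<le> real K0" unfolding K0_def by linarith
    also have "\<dots> \<le> real (Suc k)" using that by simp
    finally have "Q * (2 * D) \<le> real (Suc k) * \<delta>" using d by (simp add: divide_le_eq)
    then show ?thesis using d Dpos by (simp add: field_simps del: of_nat_Suc)
  qed
  have comp: "\<bar>lk k t $ i - maxhist \<tau> (xs k) t $ i\<bar> \<le> \<delta>' + \<delta> / (2 * D)"
    if k: "k \<ge> K0" and t: "t \<in> {0..T}" for k t i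
  proof -
    let ?k = "real (Suc k)"
    let ?y = "\<lambda>s. xs k s $ i"
    have cy: "continuous_on {t-\<tau>..t} ?y" using t by (intro xs_comp_cont) auto
    obtain ss where ss: "ss \<in> {t-\<tau>..t}" "\<And>s. s \<in> {t-\<tau>..t} \<Longrightarrow> ?y s \<le> ?y ss"
      using continuous_attains_sup[OF compact_Icc _ cy] tau by auto
    have m: "maxhist \<tau> (xs k) t $ i = ?y ss"
      unfolding maxhist_comp using ss by (intro cSup_eq_maximum) auto
    define c where "c = max (t - \<tau>) (ss - \<eta>)"
    have c: "t - \<tau> \<le> c" "c + \<eta> \<le> t" using ss \<eta> unfolding c_def by auto
    have low: "?y ss - \<delta>' \<le> ?y s" if s: "s \<in> {c..c+\<eta>}" for s
    proof -
      have "\<bar>s - ss\<bar> \<le> \<eta>" using s ss unfolding c_def by auto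
      then have "norm (xs k s - xs k ss) \<le> \<delta>'"
        using s ss c t \<eta> by (intro e0(2)) auto
      then have "\<bar>?y s - ?y ss\<bar> \<le> \<delta>'"
        using component_le_norm_cart[of "xs k s - xs k ss" i] by simp
      then show ?thesis by (simp add: abs_le_iff)
    qed
    have b1: "?y ss - \<delta>' + ln \<eta> / ?k \<le> lk k t $ i"
      using LIE_bounds(1)[where k="?k" and c=c and \<eta>=\<eta> and m="?y ss" and m'="?y ss - \<delta>'", OF cy _ ss(2) c(1) c(2) \<eta>(1) low]
        LIE_comp[OF t, of k i] by simp
    have b2: "lk k t $ i \<le> ?y ss + ln \<tau> / ?k"
      using LIE_bounds(2)[where k="?k" and c=c and \<eta>=\<eta> and m="?y ss" and m'="?y ss - \<delta>'", OF cy _ ss(2) c(1) c(2) \<eta>(1) low]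
        LIE_comp[OF t, of k i] by simp
    have q1: "\<bar>ln \<eta> / ?k\<bar> + \<bar>ln \<tau> / ?k\<bar> = Q / ?k"
      unfolding Q_def by (simp add: abs_divide add_divide_distrib del: of_nat_Suc)
    have e: "-\<bar>ln \<eta> / ?k\<bar> \<le> ln \<eta> / ?k" "ln \<tau> / ?k \<le> \<bar>ln \<tau> / ?k\<bar>"
      "0 \<le> \<bar>ln \<eta> / ?k\<bar>" "0 \<le> \<bar>ln \<tau> / ?k\<bar>"
      by (simp_all only: abs_ge_minus_self abs_ge_self abs_ge_zero minus_le_iff)
    have "\<bar>lk k t $ i - ?y ss\<bar> \<le> \<delta>' + (\<bar>ln \<eta> / ?k\<bar> + \<bar>ln \<tau> / ?k\<bar>)"
      using b1 b2 e d' by (intro abs_leI) linarith+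
    then show ?thesis unfolding m q1 using Kb[OF k] by linarith
  qed
  show ?thesis
  proof (intro exI[of _ K0] allI impI ballI)
    fix k t assume k: "K0 \<le> k" and t: "t \<in> {0..T}"
    have "norm (lk k t - maxhist \<tau> (xs k) t) \<le> (\<Sum>i\<in>UNIV. \<bar>(lk k t - maxhist \<tau> (xs k) t) $ i\<bar>)"
      by (rule norm_le_l1_cart)
    also have "\<dots> \<le> (\<Sum>i\<in>(UNIV::'n set). \<delta>' + \<delta> / (2 * D))"
      by (rule sum_mono) (use comp[OF k t] in simp)
    also have "\<dots> = D * (\<delta>' + \<delta> / (2 * D))" by (simp add: D_def)
    also have "\<dots> = 3/4 * \<delta>" unfolding \<delta>'_def using Dpos by (simp add: field_simps)
    also have "\<dots> \<le> \<delta>" using d by simp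
    finally show "norm (lk k t - maxhist \<tau> (xs k) t) \<le> \<delta>" .
  qed
qed


lemma M_cont: "continuous_on {0..T} M"
proof -
  have "continuous_on {0..T} (\<lambda>t. \<chi> i. Sup ((\<lambda>s. x s $ i) ` {t-\<tau>..t}))"
  proof (rule continuous_on_vec_lambda)
    fix i
    show "continuous_on {0..T} (\<lambda>t. Sup ((\<lambda>s. x s $ i) ` {t-\<tau>..t}))"
      by (rule sup_hist_cont[OF _ tau]) (intro continuous_intros sol_facts(1))
  qed
  then show ?thesis unfolding M_def maxhist_def .
qed

lemma x_cont0: "continuous_on {0..T} x"
  using continuous_on_subset[OF sol_facts(1)] tau by auto

lemma G_cont: "continuous_on {0..T} G"
proof -
  have c1: "continuous_on UNIV (\<lambda>p::(real^'n) \<times> (real^'n). F1 (fst p) (snd p))"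
    using lipschitz_on_continuous_on[OF L1] .
  have "continuous_on {0..T} (\<lambda>t. (\<lambda>p::(real^'n) \<times> (real^'n). F1 (fst p) (snd p)) (x t, M t))"
    by (rule continuous_on_compose2[OF c1]) (auto intro!: continuous_intros x_cont0 M_cont)
  then show ?thesis unfolding G_def by simp
qed

definition "BG = Sup ((\<lambda>t. norm (G t)) ` {0..T})"

lemma BG: "t \<in> {0..T} \<Longrightarrow> norm (G t) \<le> BG"
  unfolding BG_def
  by (rule cSUP_upper) (auto intro!: bdd_cont(1) continuous_intros G_cont)

lemma BG_nn: "0 \<le> BG" using BG[of 0] T0 by (smt (verit) atLeastAtMost_iff norm_ge_zero)

lemma G_meas: "G \<in> borel_measurable (lebesgue_on {0..T})"
  by (rule continuous_imp_measurable_on_sets_lebesgue[OF G_cont]) simp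

lemma u_int: "integrable (lebesgue_on {0..T}) u" and us_int: "integrable (lebesgue_on {0..T}) (us k)"
  using wL1 unfolding weak_L1_def by auto

lemma u_meas: "u \<in> borel_measurable (lebesgue_on {0..T})"
  using u_int by (rule borel_measurable_integrable)

lemma AE_Nk: "AE t in lebesgue_on {0..T}. t \<notin> Nk k"
proof -
  have "Nk k \<in> null_sets lebesgue" using solk_facts(4) negligible_iff_null_sets by blast
  then have "Nk k \<inter> {0..T} \<in> null_sets (lebesgue_on {0..T})"
    by (simp add: null_sets_restrict_space null_set_Int2)
  then show ?thesis
    by (rule AE_I'[OF _]) auto
qed

lemma AE_Nx: "AE t in lebesgue_on {0..T}. t \<notin> Nx"
proof -
  have "Nx \<in> null_sets lebesgue" using sol_facts(4) negligible_iff_null_sets by blast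
  then have "Nx \<inter> {0..T} \<in> null_sets (lebesgue_on {0..T})"
    by (simp add: null_sets_restrict_space null_set_Int2)
  then show ?thesis
    by (rule AE_I'[OF _]) auto
qed

lemma Gus_int: "integrable (lebesgue_on {0..T}) (\<lambda>r. G r *v us k r)"
proof (rule integrable_bdd_T[where B = "D * BG * Cu"])
  show "(\<lambda>r. G r *v us k r) \<in> borel_measurable (lebesgue_on {0..T})"
    using meas_mv G_meas usm by blast
  show "AE r in lebesgue_on {0..T}. norm (G r *v us k r) \<le> D * BG * Cu"
  proof (rule lebesgue_on_mono[OF AE_Nk[of k]])
    fix r assume r: "r \<notin> Nk k" and rT: "r \<in> {0..T}"
    have "norm (G r *v us k r) \<le> D * norm (G r) * norm (us k r)" using norm_mv unfolding D_def by blast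
    also have "\<dots> \<le> D * BG * Cu"
      using BG[OF rT] solk_facts(6)[OF rT r] Dpos BG_nn by (intro mult_mono) auto
    finally show "norm (G r *v us k r) \<le> D * BG * Cu" .
  qed
qed

lemma Gu_int: "integrable (lebesgue_on {0..T}) (\<lambda>r. G r *v u r)"
proof (rule Bochner_Integration.integrable_bound[where f = "\<lambda>r. (D * BG) *\<^sub>R u r"])
  show "integrable (lebesgue_on {0..T}) (\<lambda>r. (D * BG) *\<^sub>R u r)"
    using u_int by (rule integrable_scaleR_right)
  show "(\<lambda>r. G r *v u r) \<in> borel_measurable (lebesgue_on {0..T})"
    using meas_mv G_meas u_meas by blast
  show "AE r in lebesgue_on {0..T}. norm (G r *v u r) \<le> norm ((D * BG) *\<^sub>R u r)"
  proof (rule AE_I2)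
    fix r assume "r \<in> space (lebesgue_on {0..T})"
    then have rT: "r \<in> {0..T}" by simp
    have "norm (G r *v u r) \<le> D * norm (G r) * norm (u r)" using norm_mv unfolding D_def by blast
    also have "\<dots> \<le> D * BG * norm (u r)"
      using BG[OF rT] Dpos by (intro mult_right_mono mult_left_mono) auto
    also have "\<dots> = norm ((D * BG) *\<^sub>R u r)" using Dpos BG_nn by simp
    finally show "norm (G r *v u r) \<le> norm ((D * BG) *\<^sub>R u r)" .
  qed
qed

lemma Gus_hk: "(\<lambda>r. G r *v us k r) integrable_on {0..T}"
  by (rule integrable_on_lebesgue_on[OF Gus_int]) simp
lemma Gu_hk: "(\<lambda>r. G r *v u r) integrable_on {0..T}"
  by (rule integrable_on_lebesgue_on[OF Gu_int]) simp


definition "P k t = integral {0..t} (\<lambda>r. G r *v us k r)"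
definition "Q t = integral {0..t} (\<lambda>r. G r *v u r)"
definition "e k t = P k t - Q t"

lemma test_comp:
  assumes vi: "integrable (lebesgue_on {0..T}) (\<lambda>r. G r *v v r)" and t: "t \<in> {0..T}"
  shows "integral\<^sup>L (lebesgue_on {0..T}) (\<lambda>r. v r \<bullet> (indicator {0..t} r *\<^sub>R G r $ i))
       = integral {0..t} (\<lambda>r. G r *v v r) $ i"
proof -
  let ?f = "\<lambda>r. (G r *v v r) $ i"
  have eq: "v r \<bullet> (indicator {0..t} r *\<^sub>R G r $ i) = (if r \<in> {0..t} then ?f r else 0)" for r
    by (simp add: matrix_vector_mul_component inner_commute indicator_def)
  have fi: "integrable (lebesgue_on {0..T}) ?f"
    using vi integrable_iff_component[of "{0..T}" "\<lambda>r. G r *v v r"] by simp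
  have fi': "integrable (lebesgue_on {0..t}) ?f"
    by (rule integrable_subinterval[OF fi]) (use t in auto)
  have "integral\<^sup>L (lebesgue_on {0..T}) (\<lambda>r. v r \<bullet> (indicator {0..t} r *\<^sub>R G r $ i))
      = integral\<^sup>L (lebesgue_on {0..T}) (\<lambda>r. if r \<in> {0..t} then ?f r else 0)"
    unfolding eq ..
  also have "\<dots> = integral\<^sup>L (lebesgue_on {0..t}) ?f"
    by (rule Lebesgue_Measure.integral_restrict) (use t in auto)
  also have "\<dots> = integral {0..t} ?f"
    by (rule lebesgue_integral_eq_integral[OF fi']) simp
  also have "\<dots> = integral {0..t} (\<lambda>r. G r *v v r) $ i"
    by (rule integral_component_eq_cart) (rule integrable_on_lebesgue_on[OF vi[THEN integrable_subinterval]], use t in auto)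
  finally show ?thesis .
qed

lemma test_Linf:
  assumes t: "t \<in> {0..T}"
  shows "Linf {0..T} (\<lambda>r. indicator {0..t} r *\<^sub>R G r $ i)"
  unfolding Linf_def
proof
  have S: "{0..t} \<in> sets (lebesgue_on {0..T})" using t by (simp add: sets_restrict_space_iff)
  show "(\<lambda>r. indicator {0..t} r *\<^sub>R G r $ i) \<in> borel_measurable (lebesgue_on {0..T})"
  proof (intro borel_measurable_scaleR borel_measurable_indicator[OF S])
    show "(\<lambda>r. G r $ i) \<in> borel_measurable (lebesgue_on {0..T})"
      by (rule continuous_imp_measurable_on_sets_lebesgue) (auto intro!: continuous_intros G_cont)
  qed
  show "\<exists>B. AE r in lebesgue_on {0..T}. norm (indicator {0..t} r *\<^sub>R G r $ i) \<le> B"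
  proof (intro exI AE_I2)
    fix r assume "r \<in> space (lebesgue_on {0..T})"
    then have rT: "r \<in> {0..T}" by simp
    have "norm (indicator {0..t} r *\<^sub>R G r $ i) \<le> norm (G r $ i)" by (simp add: indicator_def)
    also have "\<dots> \<le> norm (G r)" by (rule Finite_Cartesian_Product.norm_nth_le)
    also have "\<dots> \<le> BG" by (rule BG[OF rT])
    finally show "norm (indicator {0..t} r *\<^sub>R G r $ i) \<le> BG" .
  qed
qed

lemma e_pointwise:
  assumes t: "t \<in> {0..T}"
  shows "(\<lambda>k. e k t) \<longlonglongrightarrow> 0"
proof -
  have ci: "(\<lambda>k. e k t $ i) \<longlonglongrightarrow> 0" for i
  proof -
    have "(\<lambda>k. integral\<^sup>L (lebesgue_on {0..T}) (\<lambda>r. us k r \<bullet> (indicator {0..t} r *\<^sub>R G r $ i)))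
        \<longlonglongrightarrow> integral\<^sup>L (lebesgue_on {0..T}) (\<lambda>r. u r \<bullet> (indicator {0..t} r *\<^sub>R G r $ i))"
      using wL1 test_Linf[OF t, of i] unfolding weak_L1_def by blast
    then have "(\<lambda>k. P k t $ i) \<longlonglongrightarrow> Q t $ i"
      unfolding test_comp[OF Gus_int t] test_comp[OF Gu_int t] P_def Q_def .
    then show ?thesis unfolding e_def by (simp add: LIM_zero)
  qed
  have "(\<lambda>k. \<Sum>i\<in>UNIV. \<bar>e k t $ i\<bar>) \<longlonglongrightarrow> (\<Sum>i\<in>(UNIV::'n set). 0)"
    by (intro tendsto_sum) (use tendsto_rabs_zero[OF ci] in auto)
  then have "(\<lambda>k. \<Sum>i\<in>UNIV. \<bar>e k t $ i\<bar>) \<longlonglongrightarrow> 0" by simp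
  then show ?thesis
    by (rule Lim_null_comparison[rotated]) (simp add: norm_le_l1_cart)
qed


lemma P_diff:
  assumes st: "0 \<le> s" "s \<le> t" "t \<le> T"
  shows "norm (P k t - P k s) \<le> (D * BG * Cu) * (t - s)"
proof -
  have it: "(\<lambda>r. G r *v us k r) integrable_on {0..t}"
    by (rule integrable_on_subinterval[OF Gus_hk]) (use st in auto)
  have "integral {0..s} (\<lambda>r. G r *v us k r) + integral {s..t} (\<lambda>r. G r *v us k r) = P k t"
    unfolding P_def by (rule Henstock_Kurzweil_Integration.integral_combine) (use st it in auto)
  then have eq: "P k t - P k s = integral {s..t} (\<lambda>r. G r *v us k r)" unfolding P_def by (simp add: algebra_simps)
  have "((\<lambda>r. G r *v us k r) has_integral (P k t - P k s)) {s..t}"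
    unfolding eq by (rule integrable_integral, rule integrable_on_subinterval[OF Gus_hk]) (use st in auto)
  then show ?thesis
  proof (rule spike_bound[OF _ st(2) solk_facts(4)])
    show "0 \<le> D * BG * Cu" using Dpos BG_nn Cu(1) by simp
    fix r assume r: "r \<in> {s..t}" "r \<notin> Nk k"
    then have rT: "r \<in> {0..T}" using st by auto
    have "norm (G r *v us k r) \<le> D * norm (G r) * norm (us k r)" using norm_mv unfolding D_def by blast
    also have "\<dots> \<le> D * BG * Cu"
      using BG[OF rT] solk_facts(6)[OF rT r(2)] Dpos BG_nn by (intro mult_mono) auto
    finally show "norm (G r *v us k r) \<le> D * BG * Cu" .
  qed
qed

lemma Q_cont: "continuous_on {0..T} Q"
  unfolding Q_def by (rule indefinite_integral_continuous_1[OF Gu_hk])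

lemma e_unif:
  assumes d: "0 < \<delta>"
  shows "eventually (\<lambda>k. \<forall>t\<in>{0..T}. norm (e k t) \<le> \<delta>) sequentially"
proof -
  define B where "B = D * BG * Cu"
  have B0: "0 \<le> B" unfolding B_def using Dpos BG_nn Cu(1) by simp
  have uc: "uniformly_continuous_on {0..T} Q" using compact_uniformly_continuous[OF Q_cont] by simp
  obtain \<eta>1 where e1: "\<eta>1 > 0" "\<And>s t. s \<in> {0..T} \<Longrightarrow> t \<in> {0..T} \<Longrightarrow> dist t s < \<eta>1 \<Longrightarrow> dist (Q t) (Q s) < \<delta>/3"
    using uc d unfolding uniformly_continuous_on_def by (metis zero_less_divide_iff zero_less_numeral)
  define \<eta> where "\<eta> = min \<eta>1 (\<delta> / (3 * (B + 1)))"
  have \<eta>: "0 < \<eta>" "\<eta> \<le> \<eta>1" unfolding \<eta>_def using e1 d B0 by auto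
  have Beta: "B * \<eta> \<le> \<delta>/3"
  proof -
    have "B * \<eta> \<le> B * (\<delta> / (3 * (B + 1)))" using B0 unfolding \<eta>_def by (intro mult_left_mono) auto
    also have "\<dots> \<le> \<delta>/3" using B0 d by (simp add: field_simps)
    finally show ?thesis .
  qed
  define N where "N = nat \<lceil>T/\<eta>\<rceil>"
  define pts where "pts = (\<lambda>j. min (real j * \<eta>) T) ` {0..N}"
  have fin: "finite pts" unfolding pts_def by simp
  have ptsT: "p \<in> {0..T}" if "p \<in> pts" for p using that \<eta> T0 unfolding pts_def by auto
  have ev: "eventually (\<lambda>k. \<forall>p\<in>pts. norm (e k p) < \<delta>/3) sequentially"
  proof (rule eventually_ball_finite[OF fin], intro ballI)
    fix p assume "p \<in> pts"
    then have "(\<lambda>k. e k p) \<longlonglongrightarrow> 0" using e_pointwise ptsT by blast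
    then have "\<forall>\<epsilon>>0. eventually (\<lambda>k. norm (e k p) < \<epsilon>) sequentially"
      by (auto simp: tendsto_iff dist_norm)
    then show "eventually (\<lambda>k. norm (e k p) < \<delta>/3) sequentially"
      using d by (meson zero_less_divide_iff zero_less_numeral)
  qed
  show ?thesis
    using ev
  proof (rule eventually_mono, intro ballI)
    fix k t assume H: "\<forall>p\<in>pts. norm (e k p) < \<delta>/3" and t: "t \<in> {0..T}"
    define j where "j = nat \<lfloor>t/\<eta>\<rfloor>"
    have jl: "real j * \<eta> \<le> t"
    proof -
      have "real j \<le> t/\<eta>" unfolding j_def using t \<eta> by (simp add: divide_nonneg_nonneg)
      then show ?thesis using \<eta> by (simp add: le_divide_eq)
    qed
    have ju: "t < real j * \<eta> + \<eta>"
    proof -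
      have "t/\<eta> < real j + 1" unfolding j_def using t \<eta> by linarith
      then show ?thesis using \<eta> by (simp add: divide_less_eq algebra_simps)
    qed
    have jN: "j \<le> N"
    proof -
      have "t/\<eta> \<le> T/\<eta>" using t \<eta> by (simp add: divide_right_mono)
      then show ?thesis unfolding j_def N_def by (intro nat_mono) linarith
    qed
    let ?p = "real j * \<eta>"
    have pp: "?p \<in> pts" unfolding pts_def using jN jl t by (intro image_eqI[of _ _ j]) auto
    have p0: "0 \<le> ?p" using \<eta> by simp
    have n1: "norm (e k ?p) \<le> \<delta>/3" using H pp by auto
    have n2: "norm (P k t - P k ?p) \<le> \<delta>/3"
    proof -
      have "norm (P k t - P k ?p) \<le> B * (t - ?p)" unfolding B_def using P_diff[of ?p t k] jl p0 t by auto
      also have "\<dots> \<le> B * \<eta>" using ju B0 by (intro mult_left_mono) auto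
      finally show ?thesis using Beta by linarith
    qed
    have dtp: "dist t ?p < \<eta>1" using jl ju \<eta> by (simp add: dist_real_def)
    have "dist (Q t) (Q ?p) < \<delta>/3" by (rule e1(2)[OF _ _ dtp]) (use p0 jl t in auto)
    then have n3: "norm (Q t - Q ?p) \<le> \<delta>/3" by (simp add: dist_norm)
    have "e k t = e k ?p + (P k t - P k ?p) - (Q t - Q ?p)" unfolding e_def by (simp add: algebra_simps)
    then have "norm (e k t) \<le> norm (e k ?p + (P k t - P k ?p)) + norm (Q t - Q ?p)"
      using norm_triangle_ineq4 by metis
    also have "\<dots> \<le> norm (e k ?p) + norm (P k t - P k ?p) + norm (Q t - Q ?p)"
      using norm_triangle_ineq by simp
    finally have "norm (e k t) \<le> norm (e k ?p) + norm (P k t - P k ?p) + norm (Q t - Q ?p)" .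
    then show "norm (e k t) \<le> \<delta>" using n1 n2 n3 by linarith
  qed
qed


definition "wk k t = Sup ((\<lambda>s. norm (xs k s - x s)) ` {0..t})"
definition "A k r = rk k r - rx r - G r *v (us k r - u r)"

lemma dk_cont: "continuous_on {0..T} (\<lambda>s. norm (xs k s - x s))"
  using continuous_on_subset[OF solk_facts(1)] x_cont0 tau
  by (intro continuous_intros) auto

lemma wk_bdd: "t \<in> {0..T} \<Longrightarrow> bdd_above ((\<lambda>s. norm (xs k s - x s)) ` {0..t})"
  by (rule bdd_cont(1)) (auto intro: continuous_on_subset[OF dk_cont])

lemma wk_ge0: "t \<in> {0..T} \<Longrightarrow> s \<in> {0..t} \<Longrightarrow> norm (xs k s - x s) \<le> wk k t"
  unfolding wk_def by (rule cSUP_upper[OF _ wk_bdd])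

lemma wk_ge: "t \<in> {0..T} \<Longrightarrow> s \<in> {-\<tau>..t} \<Longrightarrow> norm (xs k s - x s) \<le> wk k t"
proof (cases "s < 0")
  case True
  assume "s \<in> {-\<tau>..t}" "t \<in> {0..T}"
  then have "xs k s = x s" using True solk_facts(3) sol_facts(3) by auto
  moreover have "0 \<le> wk k t" using wk_ge0[of t 0 k] \<open>t \<in> {0..T}\<close> by (smt (verit) atLeastAtMost_iff norm_ge_zero)
  ultimately show ?thesis by simp
next
  case False
  assume "s \<in> {-\<tau>..t}" "t \<in> {0..T}"
  then show ?thesis using False wk_ge0 by auto
qed

lemma wk_nn: "t \<in> {0..T} \<Longrightarrow> 0 \<le> wk k t"
  using wk_ge0[of t 0 k] by (smt (verit) atLeastAtMost_iff norm_ge_zero)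

lemma wk0: "wk k 0 = 0"
proof -
  have "xs k 0 = x 0" using solk_facts(3)[of 0 k] sol_facts(3)[of 0] tau by simp
  then show ?thesis unfolding wk_def by simp
qed

lemma A_eq: "A k r = (F0 (xs k r) (lk k r) - F0 (x r) (M r)) + (F1 (xs k r) (lk k r) - G r) *v us k r"
  unfolding A_def rk_def rx_def by (simp add: algebra_simps)

lemma M_diff:
  assumes r: "r \<in> {0..T}" and W: "\<And>s. s \<in> {r-\<tau>..r} \<Longrightarrow> norm (xs k s - x s) \<le> W"
  shows "norm (maxhist \<tau> (xs k) r - M r) \<le> D * W"
proof -
  have ci: "\<bar>maxhist \<tau> (xs k) r $ i - M r $ i\<bar> \<le> W" for i
  proof -
    have sub: "{r-\<tau>..r} \<subseteq> {-\<tau>..T}" using r by auto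
    have c1: "continuous_on {r-\<tau>..r} (\<lambda>s. xs k s $ i)" using sub by (rule xs_comp_cont)
    have c2: "continuous_on {r-\<tau>..r} (\<lambda>s. x s $ i)"
      using continuous_on_subset[OF sol_facts(1) sub] by (intro continuous_intros)
    have pw: "\<bar>xs k s $ i - x s $ i\<bar> \<le> W" if "s \<in> {r-\<tau>..r}" for s
      using component_le_norm_cart[of "xs k s - x s" i] W[OF that] by simp
    have "Sup ((\<lambda>s. xs k s $ i) ` {r-\<tau>..r}) \<le> Sup ((\<lambda>s. x s $ i) ` {r-\<tau>..r}) + W"
    proof (rule sup_le_shift)
      fix s assume s: "s \<in> {r-\<tau>..r}"
      then have "xs k s $ i \<le> x s $ i + W" using pw[OF s] by (simp add: abs_le_iff)
      then show "\<exists>s'\<in>{r-\<tau>..r}. xs k s $ i \<le> x s' $ i + W" using s by blast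
    qed (use tau bdd_cont(1)[OF c2] in auto)
    moreover have "Sup ((\<lambda>s. x s $ i) ` {r-\<tau>..r}) \<le> Sup ((\<lambda>s. xs k s $ i) ` {r-\<tau>..r}) + W"
    proof (rule sup_le_shift)
      fix s assume s: "s \<in> {r-\<tau>..r}"
      then have "x s $ i \<le> xs k s $ i + W" using pw[OF s] by (simp add: abs_le_iff)
      then show "\<exists>s'\<in>{r-\<tau>..r}. x s $ i \<le> xs k s' $ i + W" using s by blast
    qed (use tau bdd_cont(1)[OF c1] in auto)
    ultimately show ?thesis unfolding M_def maxhist_comp by linarith
  qed
  have "norm (maxhist \<tau> (xs k) r - M r) \<le> (\<Sum>i\<in>UNIV. \<bar>(maxhist \<tau> (xs k) r - M r) $ i\<bar>)"
    by (rule norm_le_l1_cart)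
  also have "\<dots> \<le> (\<Sum>i\<in>(UNIV::'n set). W)" by (rule sum_mono) (use ci in simp)
  also have "\<dots> = D * W" by (simp add: D_def)
  finally show ?thesis .
qed


lemma A_bound:
  assumes t: "t \<in> {0..T}" and r: "r \<in> {0..t}" "r \<notin> Nk k"
    and eps: "\<forall>t\<in>{0..T}. norm (lk k t - maxhist \<tau> (xs k) t) \<le> \<epsilon>"
  shows "norm (A k r) \<le> KK * ((1 + D) * wk k t + \<epsilon>)"
proof -
  have rT: "r \<in> {0..T}" using r t by auto
  let ?\<Delta> = "norm (xs k r - x r) + norm (lk k r - M r)"
  have d1: "norm (xs k r - x r) \<le> wk k t" using wk_ge0[OF t] r by auto
  have d2: "norm (maxhist \<tau> (xs k) r - M r) \<le> D * wk k t"
    by (rule M_diff[OF rT]) (use wk_ge[OF t] r in auto)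
  have d3: "norm (lk k r - M r) \<le> \<epsilon> + D * wk k t"
  proof -
    have "norm (lk k r - M r) \<le> norm (lk k r - maxhist \<tau> (xs k) r) + norm (maxhist \<tau> (xs k) r - M r)"
      using norm_triangle_ineq[of "lk k r - maxhist \<tau> (xs k) r" "maxhist \<tau> (xs k) r - M r"] by simp
    then show ?thesis using eps rT d2 by fastforce
  qed
  have Dl: "?\<Delta> \<le> (1 + D) * wk k t + \<epsilon>" using d1 d3 by (simp add: algebra_simps)
  have "norm (A k r) \<le> norm (F0 (xs k r) (lk k r) - F0 (x r) (M r)) + norm ((F1 (xs k r) (lk k r) - G r) *v us k r)"
    unfolding A_eq by (rule norm_triangle_ineq)
  also have "norm (F0 (xs k r) (lk k r) - F0 (x r) (M r)) \<le> L0 * ?\<Delta>" by (rule lipF[OF L0])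
  also have "norm ((F1 (xs k r) (lk k r) - G r) *v us k r) \<le> D * (L1 * ?\<Delta>) * Cu"
  proof -
    have "norm ((F1 (xs k r) (lk k r) - G r) *v us k r) \<le> D * norm (F1 (xs k r) (lk k r) - G r) * norm (us k r)"
      using norm_mv unfolding D_def by blast
    also have "\<dots> \<le> D * (L1 * ?\<Delta>) * Cu"
      using lipF[OF L1, of "xs k r" "lk k r" "x r" "M r"] solk_facts(6)[OF rT r(2)] Dpos L1nn
      unfolding G_def by (intro mult_mono) auto
    finally show ?thesis .
  qed
  also have "L0 * ?\<Delta> + D * (L1 * ?\<Delta>) * Cu = KK * ?\<Delta>" unfolding KK_def by (simp add: algebra_simps)
  also have "\<dots> \<le> KK * ((1 + D) * wk k t + \<epsilon>)" using Dl KK_nn by (intro mult_left_mono) auto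
  finally show ?thesis by simp
qed

lemma P_int:
  assumes st: "0 \<le> s" "s \<le> t" "t \<le> T"
  shows "((\<lambda>r. G r *v us k r) has_integral (P k t - P k s)) {s..t}"
proof -
  have it: "(\<lambda>r. G r *v us k r) integrable_on {0..t}"
    by (rule integrable_on_subinterval[OF Gus_hk]) (use st in auto)
  have "integral {0..s} (\<lambda>r. G r *v us k r) + integral {s..t} (\<lambda>r. G r *v us k r) = P k t"
    unfolding P_def by (rule Henstock_Kurzweil_Integration.integral_combine) (use st it in auto)
  then have eq: "P k t - P k s = integral {s..t} (\<lambda>r. G r *v us k r)" unfolding P_def by (simp add: algebra_simps)
  show ?thesis
    unfolding eq by (rule integrable_integral, rule integrable_on_subinterval[OF Gus_hk]) (use st in auto)
qed

lemma Q_int: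
  assumes st: "0 \<le> s" "s \<le> t" "t \<le> T"
  shows "((\<lambda>r. G r *v u r) has_integral (Q t - Q s)) {s..t}"
proof -
  have it: "(\<lambda>r. G r *v u r) integrable_on {0..t}"
    by (rule integrable_on_subinterval[OF Gu_hk]) (use st in auto)
  have "integral {0..s} (\<lambda>r. G r *v u r) + integral {s..t} (\<lambda>r. G r *v u r) = Q t"
    unfolding Q_def by (rule Henstock_Kurzweil_Integration.integral_combine) (use st it in auto)
  then have eq: "Q t - Q s = integral {s..t} (\<lambda>r. G r *v u r)" unfolding Q_def by (simp add: algebra_simps)
  show ?thesis
    unfolding eq by (rule integrable_integral, rule integrable_on_subinterval[OF Gu_hk]) (use st in auto)
qed

lemma A_int:
  assumes st: "0 \<le> s" "s \<le> t" "t \<le> T"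
  shows "(A k has_integral ((xs k t - x t) - (xs k s - x s) - (e k t - e k s))) {s..t}"
proof -
  have i1: "(rk k has_integral (xs k t - xs k s)) {s..t}"
    by (rule sol_int[OF solk_facts(2) solk_facts(4) solk_facts(5)]) (use st in auto)
  have i2: "(rx has_integral (x t - x s)) {s..t}"
    by (rule sol_int[OF sol_facts(2) sol_facts(4) sol_facts(5)]) (use st in auto)
  have i3: "((\<lambda>r. G r *v us k r - G r *v u r) has_integral ((P k t - P k s) - (Q t - Q s))) {s..t}"
    by (rule has_integral_diff[OF P_int[OF st] Q_int[OF st]])
  have "((\<lambda>r. rk k r - rx r - (G r *v us k r - G r *v u r)) has_integral
      ((xs k t - xs k s) - (x t - x s) - ((P k t - P k s) - (Q t - Q s)))) {s..t}"
    by (rule has_integral_diff[OF has_integral_diff[OF i1 i2] i3])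
  moreover have "(\<lambda>r. rk k r - rx r - (G r *v us k r - G r *v u r)) = A k"
    unfolding A_def by (simp add: matrix_vector_mult_diff_distrib)
  moreover have "(xs k t - xs k s) - (x t - x s) - ((P k t - P k s) - (Q t - Q s))
      = (xs k t - x t) - (xs k s - x s) - (e k t - e k s)"
    unfolding e_def by (simp add: algebra_simps)
  ultimately show ?thesis by simp
qed


lemma wk_step:
  assumes eps: "\<forall>t\<in>{0..T}. norm (lk k t - maxhist \<tau> (xs k) t) \<le> \<epsilon>" "0 \<le> \<epsilon>"
    and E: "\<forall>t\<in>{0..T}. norm (e k t) \<le> E"
    and st: "0 \<le> s" "s \<le> t" "t \<le> T"
  shows "wk k t \<le> wk k s + 2 * E + (t - s) * (KK * ((1 + D) * wk k t + \<epsilon>))"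
proof -
  have tT: "t \<in> {0..T}" and sT: "s \<in> {0..T}" using st by auto
  let ?B = "KK * ((1 + D) * wk k t + \<epsilon>)"
  have B0: "0 \<le> ?B" using KK_nn Dpos wk_nn[OF tT] eps(2) by simp
  have E0: "0 \<le> E" using E T0 by (smt (verit) atLeastAtMost_iff norm_ge_zero)
  have "Sup ((\<lambda>s. norm (xs k s - x s)) ` {0..t}) \<le> wk k s + 2 * E + (t - s) * ?B"
  proof (rule cSUP_least)
    show "{0..t} \<noteq> {}" using st by auto
    fix s' assume s': "s' \<in> {0..t}"
    show "norm (xs k s' - x s') \<le> wk k s + 2 * E + (t - s) * ?B"
    proof (cases "s' \<le> s")
      case True
      then have "norm (xs k s' - x s') \<le> wk k s" using wk_ge0[OF sT] s' by auto
      moreover have "0 \<le> (t - s) * ?B" using st B0 by simp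
      ultimately show ?thesis using E0 by linarith
    next
      case False
      have s'T: "s' \<in> {0..T}" using s' st by auto
      have "norm ((xs k s' - x s') - (xs k s - x s) - (e k s' - e k s)) \<le> ?B * (s' - s)"
      proof (rule spike_bound[OF _ _ solk_facts(4) B0])
        show "(A k has_integral ((xs k s' - x s') - (xs k s - x s) - (e k s' - e k s))) {s..s'}"
          by (rule A_int) (use st s' False in auto)
        show "s \<le> s'" using False by simp
        fix r assume "r \<in> {s..s'}" "r \<notin> Nk k"
        then show "norm (A k r) \<le> ?B" using st s' by (intro A_bound[OF tT _ _ eps(1)]) auto
      qed
      also have "\<dots> \<le> ?B * (t - s)" using s' B0 by (intro mult_left_mono) auto
      finally have a: "norm ((xs k s' - x s') - (xs k s - x s) - (e k s' - e k s)) \<le> (t - s) * ?B"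
        by (simp add: mult.commute)
      have b: "norm (xs k s - x s) \<le> wk k s" using wk_ge0[OF sT] st by auto
      have c: "norm (e k s') \<le> E" "norm (e k s) \<le> E" using E s'T sT by auto
      have "norm (xs k s' - x s') \<le> norm ((xs k s' - x s') - (xs k s - x s) - (e k s' - e k s))
          + norm (xs k s - x s) + norm (e k s') + norm (e k s)"
        by (smt (verit, best) norm_triangle_ineq4 norm_triangle_ineq diff_add_cancel add_diff_cancel)
      then show ?thesis using a b c by linarith
    qed
  qed
  then show ?thesis unfolding wk_def[of k t] .
qed

definition "hD = 1 / (2 * (KK * (1 + D)) + 1)"
definition "CD = (real (nat \<lceil>T/hD\<rceil>) + 1) * 2 ^ nat \<lceil>T/hD\<rceil>"

lemma hD_pos: "0 < hD" unfolding hD_def using mult_nonneg_nonneg[OF KK_nn, of "1 + D"] Dpos by simp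

lemma wk_bound:
  assumes eps: "\<forall>t\<in>{0..T}. norm (lk k t - maxhist \<tau> (xs k) t) \<le> \<epsilon>" "0 \<le> \<epsilon>"
    and E: "\<forall>t\<in>{0..T}. norm (e k t) \<le> E"
  shows "wk k T \<le> (4 * E + 2 * T * KK * \<epsilon>) * CD"
proof -
  have E0: "0 \<le> E" using E T0 by (smt (verit) atLeastAtMost_iff norm_ge_zero)
  let ?a = "4 * E + 2 * T * KK * \<epsilon>"
  have a0: "0 \<le> ?a" using E0 T0 KK_nn eps(2) by simp
  have c: "KK * (1 + D) \<ge> 0" using KK_nn Dpos by simp
  have hc: "hD * (KK * (1 + D)) \<le> 1/2" unfolding hD_def using c by (simp add: field_simps)
  have step: "wk k t \<le> ?a + 2 * wk k s" if st: "0 \<le> s" "s \<le> t" "t \<le> T" "t - s \<le> hD" for s t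
  proof -
    have tT: "t \<in> {0..T}" using st by auto
    have W0: "0 \<le> wk k t" by (rule wk_nn[OF tT])
    have "(t - s) * (KK * (1 + D)) \<le> hD * (KK * (1 + D))" using st c by (intro mult_right_mono) auto
    then have q1: "(t - s) * (KK * (1 + D)) * wk k t \<le> (1/2) * wk k t"
      using hc W0 by (intro mult_right_mono) auto
    have q2: "(t - s) * (KK * \<epsilon>) \<le> T * (KK * \<epsilon>)" using st KK_nn eps(2) by (intro mult_right_mono) auto
    have "wk k t \<le> wk k s + 2 * E + (t - s) * (KK * ((1 + D) * wk k t + \<epsilon>))"
      by (rule wk_step[OF eps E st(1-3)])
    also have "(t - s) * (KK * ((1 + D) * wk k t + \<epsilon>)) = (t - s) * (KK * (1 + D)) * wk k t + (t - s) * (KK * \<epsilon>)"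
      by (simp add: algebra_simps)
    finally show ?thesis using q1 q2 by (simp add: algebra_simps)
  qed
  have "wk k T \<le> ?a * (real (nat \<lceil>T/hD\<rceil>) + 1) * 2 ^ nat \<lceil>T/hD\<rceil>"
    by (rule gw[OF hD_pos _ a0 _ _ step]) (use wk0 a0 T0 in auto)
  then show ?thesis unfolding CD_def by (simp add: mult.assoc)
qed


lemma CD_ge1: "1 \<le> CD"
proof -
  have a: "1 \<le> real (nat \<lceil>T/hD\<rceil>) + 1" by simp
  have b: "1 \<le> (2::real) ^ nat \<lceil>T/hD\<rceil>" by simp
  have "1 * 1 \<le> (real (nat \<lceil>T/hD\<rceil>) + 1) * (2::real) ^ nat \<lceil>T/hD\<rceil>"
    by (rule mult_mono[OF a b]) auto
  then show ?thesis unfolding CD_def by simp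
qed

lemma unif_conv:
  assumes d: "0 < \<delta>"
  shows "eventually (\<lambda>k. wk k T \<le> \<delta> \<and> (\<forall>t\<in>{0..T}. norm (lk k t - maxhist \<tau> (xs k) t) \<le> \<delta>)) sequentially"
proof -
  define c where "c = (4 + 2 * T * KK) * CD + 1"
  have c1: "1 \<le> c" unfolding c_def using T0 KK_nn CD_ge1 by simp
  define \<delta>1 where "\<delta>1 = \<delta> / c"
  have d1: "0 < \<delta>1" "\<delta>1 \<le> \<delta>" unfolding \<delta>1_def using d c1 by (auto simp: divide_le_eq)
  obtain K0 where K0: "\<And>k. k \<ge> K0 \<Longrightarrow> \<forall>t\<in>{0..T}. norm (lk k t - maxhist \<tau> (xs k) t) \<le> \<delta>1"
    using eps_conv[OF d1(1)] by blast
  have ev1: "eventually (\<lambda>k. \<forall>t\<in>{0..T}. norm (lk k t - maxhist \<tau> (xs k) t) \<le> \<delta>1) sequentially"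
    unfolding eventually_sequentially using K0 by blast
  have ev2: "eventually (\<lambda>k. \<forall>t\<in>{0..T}. norm (e k t) \<le> \<delta>1) sequentially"
    by (rule e_unif[OF d1(1)])
  show ?thesis
    using ev1 ev2
  proof eventually_elim
    case (elim k)
    have "wk k T \<le> (4 * \<delta>1 + 2 * T * KK * \<delta>1) * CD"
      by (rule wk_bound[OF elim(1) _ elim(2)]) (use d1 in simp)
    also have "\<dots> = \<delta>1 * ((4 + 2 * T * KK) * CD)" by (simp add: algebra_simps)
    also have "\<dots> \<le> \<delta>1 * c" unfolding c_def using d1 by (intro mult_left_mono) auto
    also have "\<dots> = \<delta>" unfolding \<delta>1_def using c1 by simp
    finally show ?case using elim(1) d1 by fastforce
  qed
qed


lemma AE_not_negl: "negligible N \<Longrightarrow> AE t in lebesgue_on {0..T}. t \<notin> N"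
proof -
  assume "negligible N"
  then have "N \<in> null_sets lebesgue" using negligible_iff_null_sets by blast
  then have "N \<inter> {0..T} \<in> null_sets (lebesgue_on {0..T})"
    by (simp add: null_sets_restrict_space null_set_Int2)
  then show ?thesis by (rule AE_I'[OF _]) auto
qed

lemma AE_good: "AE t in lebesgue_on {0..T}. t \<in> {0<..<T} \<and> t \<notin> Nk k \<and> t \<notin> Nx"
proof -
  have "negligible (Nk k \<union> Nx \<union> {0, T})" using solk_facts(4) sol_facts(4) by simp
  from AE_not_negl[OF this] show ?thesis by (rule lebesgue_on_mono) auto
qed

definition "vk k t = vector_derivative (xs k) (at t)"
definition "vx t = vector_derivative x (at t)"

lemma vk_eq: "t \<in> {0<..<T} \<Longrightarrow> t \<notin> Nk k \<Longrightarrow> vk k t = rk k t"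
  unfolding vk_def by (rule vector_derivative_at[OF solk_facts(5)]) auto
lemma vx_eq: "t \<in> {0<..<T} \<Longrightarrow> t \<notin> Nx \<Longrightarrow> vx t = rx t"
  unfolding vx_def by (rule vector_derivative_at[OF sol_facts(5)]) auto

lemma vk_meas: "vk k \<in> borel_measurable (lebesgue_on {0..T})"
proof -
  have "(\<lambda>t. vector_derivative (xs k) (at t)) absolutely_integrable_on {0..T}"
    by (rule vd_abs_int[OF _ solk_facts(2) solk_facts(4) solk_facts(5)]) (use T0 in auto)
  then show ?thesis unfolding vk_def[abs_def]
    by (rule absolutely_integrable_imp_borel_measurable) simp
qed
lemma vx_meas: "vx \<in> borel_measurable (lebesgue_on {0..T})"
proof -
  have "(\<lambda>t. vector_derivative x (at t)) absolutely_integrable_on {0..T}"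
    by (rule vd_abs_int[OF _ sol_facts(2) sol_facts(4) sol_facts(5)]) (use T0 in auto)
  then show ?thesis unfolding vx_def[abs_def]
    by (rule absolutely_integrable_imp_borel_measurable) simp
qed

lemma vk_bound: "AE t in lebesgue_on {0..T}. norm (vk k t) \<le> Lam"
  using AE_good[of k]
proof (rule eventually_mono)
  fix t assume t: "t \<in> {0<..<T} \<and> t \<notin> Nk k \<and> t \<notin> Nx"
  then have "vk k t = rk k t" by (intro vk_eq) auto
  then show "norm (vk k t) \<le> Lam" using rk_Lam[of t k] t by auto
qed
lemma vx_bound: "AE t in lebesgue_on {0..T}. norm (vx t) \<le> Lx"
  using AE_good[of 0]
proof (rule eventually_mono)
  fix t assume t: "t \<in> {0<..<T} \<and> t \<notin> Nk 0 \<and> t \<notin> Nx"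
  then have d: "(x has_vector_derivative rx t) (at t)" by (intro sol_facts(5)) auto
  have "vx t = rx t" using t by (intro vx_eq) auto
  then show "norm (vx t) \<le> Lx" using lip_deriv_bound[OF sol_facts(2) _ d] t by auto
qed

lemma ghat_eq: "(B *v w) \<bullet> g = w \<bullet> (\<Sum>i\<in>UNIV. g $ i *\<^sub>R B $ i)"
proof -
  have "(B *v w) \<bullet> g = (\<Sum>i\<in>UNIV. (B *v w) $ i * g $ i)"
    unfolding inner_vec_def by simp
  also have "\<dots> = (\<Sum>i\<in>UNIV. g $ i * (w \<bullet> B $ i))"
    by (rule sum.cong) (simp_all add: matrix_vector_mul_component inner_commute[of w])
  also have "\<dots> = w \<bullet> (\<Sum>i\<in>UNIV. g $ i *\<^sub>R B $ i)"
    by (simp add: inner_sum_right)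
  finally show ?thesis .
qed


lemma Linf_E:
  assumes "Linf {0..T} g"
  obtains B where "g \<in> borel_measurable (lebesgue_on {0..T})" "AE t in lebesgue_on {0..T}. norm (g t) \<le> B" "0 \<le> B"
proof -
  obtain B where B: "g \<in> borel_measurable (lebesgue_on {0..T})" "AE t in lebesgue_on {0..T}. norm (g t) \<le> B"
    using assms unfolding Linf_def by blast
  have "AE t in lebesgue_on {0..T}. norm (g t) \<le> max B 0"
    using B(2) by (rule eventually_mono) simp
  then show ?thesis using that[of "max B 0"] B(1) by simp
qed

lemma AE_space: "AE t in lebesgue_on {0..T}. t \<in> {0..T}"
  by (rule AE_I2) simp

lemma xs_meas: "xs k \<in> borel_measurable (lebesgue_on {0..T})"
  by (rule continuous_imp_measurable_on_sets_lebesgue[OF continuous_on_subset[OF solk_facts(1)]]) (use tau in auto)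
lemma x_meas: "x \<in> borel_measurable (lebesgue_on {0..T})"
  by (rule continuous_imp_measurable_on_sets_lebesgue[OF x_cont0]) simp

lemma x_bdd: obtains Rx where "\<And>t. t \<in> {0..T} \<Longrightarrow> norm (x t) \<le> Rx" "0 \<le> Rx"
proof -
  have "bounded (x ` {0..T})" by (rule compact_imp_bounded[OF compact_continuous_image[OF x_cont0 compact_Icc]])
  then obtain Rx where "\<forall>t\<in>{0..T}. norm (x t) \<le> Rx" unfolding bounded_iff by blast
  then have "\<And>t. t \<in> {0..T} \<Longrightarrow> norm (x t) \<le> Rx" by blast
  moreover then have "0 \<le> Rx" using norm_ge_zero[of "x 0"] T0 by (smt (verit) atLeastAtMost_iff)
  ultimately show ?thesis using that by blast
qed

lemma inner_bd: "norm (a \<bullet> b) \<le> norm a * norm (b::'a::real_inner)"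
  by (simp add: Cauchy_Schwarz_ineq2)


lemma W11: "weak_W11 {0..T} xs x"
  unfolding weak_W11_def
proof (intro allI impI)
  fix g0 g1 :: "real \<Rightarrow> real^'n"
  assume g0L: "Linf {0..T} g0" and g1L: "Linf {0..T} g1"
  obtain B0 where g0m: "g0 \<in> borel_measurable (lebesgue_on {0..T})"
    and g0b: "AE t in lebesgue_on {0..T}. norm (g0 t) \<le> B0" and B0: "0 \<le> B0"
    using Linf_E[OF g0L] by blast
  obtain B1 where g1m: "g1 \<in> borel_measurable (lebesgue_on {0..T})"
    and g1b: "AE t in lebesgue_on {0..T}. norm (g1 t) \<le> B1" and B1: "0 \<le> B1"
    using Linf_E[OF g1L] by blast
  obtain Rx where Rx: "\<And>t. t \<in> {0..T} \<Longrightarrow> norm (x t) \<le> Rx" "0 \<le> Rx" using x_bdd by blast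
  define gh where "gh t = (\<Sum>i\<in>UNIV. g1 t $ i *\<^sub>R G t $ i)" for t
  have ghm: "gh \<in> borel_measurable (lebesgue_on {0..T})"
    unfolding gh_def
  proof (intro borel_measurable_sum borel_measurable_scaleR)
    fix i
    show "(\<lambda>t. g1 t $ i) \<in> borel_measurable (lebesgue_on {0..T})"
      by (rule measurable_compose[OF g1m borel_measurable_nth])
    show "(\<lambda>t. G t $ i) \<in> borel_measurable (lebesgue_on {0..T})"
      by (rule continuous_imp_measurable_on_sets_lebesgue) (auto intro!: continuous_intros G_cont)
  qed
  have ghb: "AE t in lebesgue_on {0..T}. norm (gh t) \<le> D * B1 * BG"
    using g1b AE_space
  proof eventually_elim
    case (elim t)
    have "norm (gh t) \<le> (\<Sum>i\<in>UNIV. norm (g1 t $ i *\<^sub>R G t $ i))" unfolding gh_def by (rule norm_sum)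
    also have "\<dots> \<le> (\<Sum>i\<in>(UNIV::'n set). B1 * BG)"
    proof (rule sum_mono)
      fix i
      have "norm (g1 t $ i *\<^sub>R G t $ i) = \<bar>g1 t $ i\<bar> * norm (G t $ i)" by simp
      also have "\<dots> \<le> B1 * BG"
        using component_le_norm_cart[of "g1 t" i] elim Finite_Cartesian_Product.norm_nth_le[of "G t" i] BG[of t] BG_nn
        by (intro mult_mono) auto
      finally show "norm (g1 t $ i *\<^sub>R G t $ i) \<le> B1 * BG" .
    qed
    also have "\<dots> = D * B1 * BG" by (simp add: D_def)
    finally show ?case .
  qed
  have ghL: "Linf {0..T} gh" unfolding Linf_def using ghm ghb by blast
  have lim3: "(\<lambda>k. integral\<^sup>L (lebesgue_on {0..T}) (\<lambda>t. us k t \<bullet> gh t))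
      \<longlonglongrightarrow> integral\<^sup>L (lebesgue_on {0..T}) (\<lambda>t. u t \<bullet> gh t)"
    using wL1 ghL unfolding weak_L1_def by blast
  define fk where "fk k t = xs k t \<bullet> g0 t + vk k t \<bullet> g1 t" for k t
  define fx where "fx t = x t \<bullet> g0 t + vx t \<bullet> g1 t" for t
  define p1 where "p1 k t = (xs k t - x t) \<bullet> g0 t" for k t
  define p2 where "p2 k t = (vk k t - vx t - G t *v (us k t - u t)) \<bullet> g1 t" for k t
  define p3 where "p3 k t = us k t \<bullet> gh t" for k t
  define p4 where "p4 t = u t \<bullet> gh t" for t
  have ident: "fk k t = fx t + p1 k t + p2 k t + (p3 k t - p4 t)" for k t
  proof -
    have "(G t *v (us k t - u t)) \<bullet> g1 t = (us k t - u t) \<bullet> gh t" unfolding gh_def by (rule ghat_eq)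
    then have "(G t *v (us k t - u t)) \<bullet> g1 t = p3 k t - p4 t" unfolding p3_def p4_def by (simp add: inner_diff_left)
    then show ?thesis unfolding fk_def fx_def p1_def p2_def by (simp add: inner_diff_left algebra_simps)
  qed
  have int_fk: "integrable (lebesgue_on {0..T}) (fk k)" for k
  proof (rule integrable_bdd_T[where B = "R * B0 + Lam * B1"])
    show "fk k \<in> borel_measurable (lebesgue_on {0..T})" unfolding fk_def[abs_def]
      by (intro borel_measurable_add borel_measurable_inner xs_meas vk_meas g0m g1m)
    show "AE t in lebesgue_on {0..T}. norm (fk k t) \<le> R * B0 + Lam * B1"
      using g0b g1b vk_bound[of k] AE_space
    proof eventually_elim
      case (elim t)
      have "norm (fk k t) \<le> norm (xs k t \<bullet> g0 t) + norm (vk k t \<bullet> g1 t)"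
        unfolding fk_def by (rule norm_triangle_ineq)
      also have "\<dots> \<le> norm (xs k t) * norm (g0 t) + norm (vk k t) * norm (g1 t)"
        by (intro add_mono inner_bd)
      also have "\<dots> \<le> R * B0 + Lam * B1"
        using elim xs_bound[of t k] tau R_nn Lam_nn by (intro add_mono mult_mono) auto
      finally show ?case .
    qed
  qed
  have int_fx: "integrable (lebesgue_on {0..T}) fx"
  proof (rule integrable_bdd_T[where B = "Rx * B0 + Lx * B1"])
    show "fx \<in> borel_measurable (lebesgue_on {0..T})" unfolding fx_def[abs_def]
      by (intro borel_measurable_add borel_measurable_inner x_meas vx_meas g0m g1m)
    show "AE t in lebesgue_on {0..T}. norm (fx t) \<le> Rx * B0 + Lx * B1"
      using g0b g1b vx_bound AE_space
    proof eventually_elim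
      case (elim t)
      have "norm (fx t) \<le> norm (x t \<bullet> g0 t) + norm (vx t \<bullet> g1 t)"
        unfolding fx_def by (rule norm_triangle_ineq)
      also have "\<dots> \<le> norm (x t) * norm (g0 t) + norm (vx t) * norm (g1 t)"
        by (intro add_mono inner_bd)
      also have "\<dots> \<le> Rx * B0 + Lx * B1"
        using elim Rx lipschitz_on_nonneg[OF sol_facts(2)] by (intro add_mono mult_mono) auto
      finally show ?case .
    qed
  qed
  have int_p1: "integrable (lebesgue_on {0..T}) (p1 k)" for k
  proof (rule integrable_bdd_T[where B = "(R + Rx) * B0"])
    show "p1 k \<in> borel_measurable (lebesgue_on {0..T})" unfolding p1_def[abs_def]
      by (intro borel_measurable_diff borel_measurable_inner xs_meas x_meas g0m)
    show "AE t in lebesgue_on {0..T}. norm (p1 k t) \<le> (R + Rx) * B0"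
      using g0b AE_space
    proof eventually_elim
      case (elim t)
      have "norm (p1 k t) \<le> norm (xs k t - x t) * norm (g0 t)" unfolding p1_def by (rule inner_bd)
      also have "\<dots> \<le> (R + Rx) * B0"
      proof (intro mult_mono)
        show "norm (xs k t - x t) \<le> R + Rx"
          using norm_triangle_ineq4[of "xs k t" "x t"] xs_bound[of t k] Rx(1)[of t] elim tau by auto
      qed (use elim R_nn Rx in auto)
      finally show ?case .
    qed
  qed
  have int_p3: "integrable (lebesgue_on {0..T}) (p3 k)" for k
  proof (rule integrable_bdd_T[where B = "Cu * (D * B1 * BG)"])
    show "p3 k \<in> borel_measurable (lebesgue_on {0..T})" unfolding p3_def[abs_def]
      using usm ghm by (intro borel_measurable_inner) auto
    show "AE t in lebesgue_on {0..T}. norm (p3 k t) \<le> Cu * (D * B1 * BG)"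
      using ghb Cu(2)[of k]
    proof eventually_elim
      case (elim t)
      have "norm (p3 k t) \<le> norm (us k t) * norm (gh t)" unfolding p3_def by (rule inner_bd)
      also have "\<dots> \<le> Cu * (D * B1 * BG)" using elim Cu(1) by (intro mult_mono) auto
      finally show ?case .
    qed
  qed
  have int_p4: "integrable (lebesgue_on {0..T}) p4"
  proof (rule Bochner_Integration.integrable_bound[where f = "\<lambda>t. (D * B1 * BG) *\<^sub>R u t"])
    show "integrable (lebesgue_on {0..T}) (\<lambda>t. (D * B1 * BG) *\<^sub>R u t)"
      using u_int by (rule integrable_scaleR_right)
    show "p4 \<in> borel_measurable (lebesgue_on {0..T})" unfolding p4_def[abs_def]
      using u_meas ghm by (intro borel_measurable_inner) auto
    have c0: "0 \<le> D * B1 * BG" using Dpos B1 BG_nn by simp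
    show "AE t in lebesgue_on {0..T}. norm (p4 t) \<le> norm ((D * B1 * BG) *\<^sub>R u t)"
      using ghb
    proof eventually_elim
      case (elim t)
      have "norm (p4 t) \<le> norm (u t) * norm (gh t)" unfolding p4_def by (rule inner_bd)
      also have "\<dots> \<le> norm (u t) * (D * B1 * BG)" using elim by (intro mult_left_mono) auto
      also have "\<dots> = norm ((D * B1 * BG) *\<^sub>R u t)" using c0 by (simp add: mult.commute)
      finally show ?case .
    qed
  qed
  have int_p2: "integrable (lebesgue_on {0..T}) (p2 k)" for k
  proof -
    have "p2 k = (\<lambda>t. fk k t - fx t - p1 k t - (p3 k t - p4 t))" using ident by (auto simp: algebra_simps)
    moreover have "integrable (lebesgue_on {0..T}) (\<lambda>t. fk k t - fx t - p1 k t - (p3 k t - p4 t))"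
      using int_fk int_fx int_p1 int_p3 int_p4 by (intro Bochner_Integration.integrable_diff) auto
    ultimately show ?thesis by simp
  qed
  let ?I = "integral\<^sup>L (lebesgue_on {0..T})"
  have ieq: "?I (fk k) = ?I fx + (?I (p1 k) + ?I (p2 k)) + (?I (p3 k) - ?I p4)" for k
  proof -
    have "?I (fk k) = ?I (\<lambda>t. fx t + p1 k t + p2 k t + (p3 k t - p4 t))"
      using ident by presburger
    also have "\<dots> = ?I fx + ?I (p1 k) + ?I (p2 k) + (?I (p3 k) - ?I p4)"
      using int_fx int_p1 int_p2 int_p3 int_p4
      by (simp add: Bochner_Integration.integral_add Bochner_Integration.integral_diff)
    finally show ?thesis by simp
  qed
  have lim12: "(\<lambda>k. ?I (p1 k) + ?I (p2 k)) \<longlonglongrightarrow> 0"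
  proof (rule tendsto_zero_eps)
    fix \<delta> :: real assume d: "0 < \<delta>"
    define c where "c = T * (B0 + KK * (2 + D) * B1) + 1"
    have c1: "1 \<le> c" unfolding c_def using T0 B0 B1 KK_nn Dpos by simp
    define \<delta>' where "\<delta>' = \<delta> / c"
    have d': "0 < \<delta>'" unfolding \<delta>'_def using d c1 by simp
    show "eventually (\<lambda>k. norm (?I (p1 k) + ?I (p2 k)) \<le> \<delta>) sequentially"
      using unif_conv[OF d']
    proof (rule eventually_mono)
      fix k assume H: "wk k T \<le> \<delta>' \<and> (\<forall>t\<in>{0..T}. norm (lk k t - maxhist \<tau> (xs k) t) \<le> \<delta>')"
      have TT: "T \<in> {0..T}" using T0 by simp
      have n1: "norm (?I (p1 k)) \<le> (\<delta>' * B0) * (T - 0)"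
      proof (rule int_bound_T[OF int_p1])
        show "0 \<le> \<delta>' * B0" using d' B0 by simp
        show "AE t in lebesgue_on {0..T}. norm (p1 k t) \<le> \<delta>' * B0"
          using g0b AE_space
        proof eventually_elim
          case (elim t)
          have "norm (p1 k t) \<le> norm (xs k t - x t) * norm (g0 t)" unfolding p1_def by (rule inner_bd)
          also have "\<dots> \<le> \<delta>' * B0"
            using elim wk_ge0[OF TT, of t k] H d' by (intro mult_mono) auto
          finally show ?case .
        qed
      qed (use T0 in simp)
      have n2: "norm (?I (p2 k)) \<le> (KK * ((1 + D) * \<delta>' + \<delta>') * B1) * (T - 0)"
      proof (rule int_bound_T[OF int_p2])
        show "0 \<le> KK * ((1 + D) * \<delta>' + \<delta>') * B1" using KK_nn Dpos d' B1 by simp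
        show "AE t in lebesgue_on {0..T}. norm (p2 k t) \<le> KK * ((1 + D) * \<delta>' + \<delta>') * B1"
          using g1b AE_good[of k]
        proof eventually_elim
          case (elim t)
          have tT: "t \<in> {0..T}" using elim by auto
          have "p2 k t = A k t \<bullet> g1 t" unfolding p2_def A_def using elim vk_eq vx_eq by auto
          then have "norm (p2 k t) \<le> norm (A k t) * norm (g1 t)" using inner_bd[of "A k t" "g1 t"] by simp
          also have "\<dots> \<le> (KK * ((1 + D) * \<delta>' + \<delta>')) * B1"
          proof (rule mult_mono)
            have "norm (A k t) \<le> KK * ((1 + D) * wk k T + \<delta>')"
              using A_bound[OF TT _ _ conjunct2[OF H]] elim tT by auto
            also have "\<dots> \<le> KK * ((1 + D) * \<delta>' + \<delta>')"
              using H KK_nn Dpos by (intro mult_left_mono add_right_mono) auto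
            finally show "norm (A k t) \<le> KK * ((1 + D) * \<delta>' + \<delta>')" .
          qed (use elim KK_nn Dpos d' in auto)
          finally show ?case .
        qed
      qed (use T0 in simp)
      have "norm (?I (p1 k) + ?I (p2 k)) \<le> norm (?I (p1 k)) + norm (?I (p2 k))" by (rule norm_triangle_ineq)
      also have "\<dots> \<le> (\<delta>' * B0) * T + (KK * ((1 + D) * \<delta>' + \<delta>') * B1) * T" using n1 n2 by simp
      also have "\<dots> = \<delta>' * (T * (B0 + KK * (2 + D) * B1))" by (simp add: algebra_simps)
      also have "\<dots> \<le> \<delta>' * c" unfolding c_def using d' by (intro mult_left_mono) auto
      also have "\<dots> = \<delta>" unfolding \<delta>'_def using c1 by simp
      finally show "norm (?I (p1 k) + ?I (p2 k)) \<le> \<delta>" .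
    qed
  qed
  have lim34: "(\<lambda>k. ?I (p3 k) - ?I p4) \<longlonglongrightarrow> 0"
    using lim3 unfolding p3_def[abs_def] p4_def[abs_def] by (simp add: LIM_zero)
  have "(\<lambda>k. ?I fx + (?I (p1 k) + ?I (p2 k)) + (?I (p3 k) - ?I p4)) \<longlonglongrightarrow> ?I fx + 0 + 0"
    by (intro tendsto_add tendsto_const lim12 lim34)
  then have "(\<lambda>k. ?I (fk k)) \<longlonglongrightarrow> ?I fx" unfolding ieq by simp
  then show "(\<lambda>k. ?I (\<lambda>t. xs k t \<bullet> g0 t + vector_derivative (xs k) (at t) \<bullet> g1 t))
      \<longlonglongrightarrow> ?I (\<lambda>t. x t \<bullet> g0 t + vector_derivative x (at t) \<bullet> g1 t)"
    unfolding fk_def[abs_def] fx_def[abs_def] vk_def vx_def .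
qed

end


theorem corollary5p2:
  fixes T \<tau> :: real
    and F0 :: "real^'n \<Rightarrow> real^'n \<Rightarrow> real^'n"
    and F1 :: "real^'n \<Rightarrow> real^'n \<Rightarrow> real^'m^'n"
    and \<phi> :: "real \<Rightarrow> real^'n"
    and us :: "nat \<Rightarrow> real \<Rightarrow> real^'m" and u :: "real \<Rightarrow> real^'m"
    and xs :: "nat \<Rightarrow> real \<Rightarrow> real^'n" and x :: "real \<Rightarrow> real^'n"
  assumes "T > 0" and "\<tau> > 0"
    and "lip_C1 (\<lambda>p::(real^'n) \<times> (real^'n). F0 (fst p) (snd p))"
    and "lip_C1 (\<lambda>p::(real^'n) \<times> (real^'n). F1 (fst p) (snd p))"
    and "continuous_on {-\<tau>..0} \<phi>"
    and "\<forall>k. us k \<in> borel_measurable (lebesgue_on {0..T})"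
    and "\<exists>C. \<forall>k. AE t in lebesgue_on {0..T}. norm (us k t) \<le> C"
    and "weak_L1 {0..T} us u"
    and "\<forall>k. is_solution \<tau> T \<phi>
           (\<lambda>t. F0 (xs k t) (LIE (real (Suc k)) \<tau> (xs k) t)
                 + F1 (xs k t) (LIE (real (Suc k)) \<tau> (xs k) t) *v us k t) (xs k)"
    and "is_solution \<tau> T \<phi> (\<lambda>t. F0 (x t) (maxhist \<tau> x t) + F1 (x t) (maxhist \<tau> x t) *v u t) x"
  shows "weak_W11 {0..T} xs x"
  proof -
  have "cor T \<tau> F0 F1 \<phi> us u xs x"
    unfolding cor_def using assms by blast
  then show ?thesis by (rule cor.W11)
qed

end
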